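(* Let $\langle P_0;\le_0\rangle$ and $\langle P_1;\le_1\rangle$ be bounded ordered sets and let $\psi\colon P_0\to P_1$ be a $0$-separating $\{0,1\}$-preserving monotone map. Then there exist a bounded lattice $L_1$, a $\{0,1\}$-sublattice $L_0$ of $L_1$, and order isomorphisms $\xi_0\colon\langle P_0;\le_0\rangle\to\langle\mathrm{Princ}(L_0);\subseteq\rangle$ and $\xi_1\colon\langle P_1;\le_1\rangle\to\langle\mathrm{Princ}(L_1);\subseteq\rangle$ such that $\psi=\xi_1^{-1}\circ\zeta_{L_0,L_1}\circ\xi_0$.
   Context: An ordered set is bounded if it has a least element $0$ and a greatest element $1$; a lattice is bounded if it has $0$ and $1$. For bounded ordered sets $P,Q$, a map $\psi\colon P\to Q$ is a $\{0,1\}$-preserving monotone map if $\psi(0_P)=0_Q$, $\psi(1_P)=1_Q$ and $x\le_P y$ implies $\psi(x)\le_Q\psi(y)$; it is $0$-separating if moreover $\psi^{-1}(0_Q)=\{0_P\}$. For a lattice $L$ and $x,y\in L$, $\mathrm{con}_L(x,y)$ denotes the smallest congruence of $L$ containing $(x,y)$, and $\mathrm{Princ}(L)$ is the set of such principal congruences of $L$, ordered by inclusion. A $\{0,1\}$-sublattice of a bounded lattice $L$ is a sublattice containing $0_L$ and $1_L$. For a $\{0,1\}$-sublattice $L_0$ of $L_1$, $\zeta_{L_0,L_1}\colon\mathrm{Princ}(L_0)\to\mathrm{Princ}(L_1)$ is defined by $\mathrm{con}_{L_0}(x,y)\mapsto\mathrm{con}_{L_1}(x,y)$. Maps are composed right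 to left. *)

theory Defs
  imports Main
begin

definition partial_order_on' :: "'a set \<Rightarrow> ('a \<Rightarrow> 'a \<Rightarrow> bool) \<Rightarrow> bool" where
  "partial_order_on' P le \<longleftrightarrow>
     (\<forall>x\<in>P. le x x) \<and>
     (\<forall>x\<in>P. \<forall>y\<in>P. le x y \<and> le y x \<longrightarrow> x = y) \<and>
     (\<forall>x\<in>P. \<forall>y\<in>P. \<forall>z\<in>P. le x y \<and> le y z \<longrightarrow> le x z)"

definition is_least :: "'a set \<Rightarrow> ('a \<Rightarrow> 'a \<Rightarrow> bool) \<Rightarrow> 'a \<Rightarrow> bool" where
  "is_least P le a \<longleftrightarrow> a \<in> P \<and> (\<forall>x\<in>P. le a x)"

definition is_greatest :: "'a set \<Rightarrow> ('a \<Rightarrow> 'a \<Rightarrow> bool) \<Rightarrow> 'a \<Rightarrow> bool" where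
  "is_greatest P le a \<longleftrightarrow> a \<in> P \<and> (\<forall>x\<in>P. le x a)"

definition bounded_ordered_set :: "'a set \<Rightarrow> ('a \<Rightarrow> 'a \<Rightarrow> bool) \<Rightarrow> bool" where
  "bounded_ordered_set P le \<longleftrightarrow> partial_order_on' P le \<and>
     (\<exists>a. is_least P le a) \<and> (\<exists>b. is_greatest P le b)"

definition is_lub :: "'a set \<Rightarrow> ('a \<Rightarrow> 'a \<Rightarrow> bool) \<Rightarrow> 'a \<Rightarrow> 'a \<Rightarrow> 'a \<Rightarrow> bool" where
  "is_lub L le x y s \<longleftrightarrow> s \<in> L \<and> le x s \<and> le y s \<and> (\<forall>z\<in>L. le x z \<and> le y z \<longrightarrow> le s z)"

definition is_glb :: "'a set \<Rightarrow> ('a \<Rightarrow> 'a \<Rightarrow> bool) \<Rightarrow> 'a \<Rightarrow> 'a \<Rightarrow> 'a \<Rightarrow> bool" where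
  "is_glb L le x y s \<longleftrightarrow> s \<in> L \<and> le s x \<and> le s y \<and> (\<forall>z\<in>L. le z x \<and> le z y \<longrightarrow> le z s)"

definition is_lattice :: "'a set \<Rightarrow> ('a \<Rightarrow> 'a \<Rightarrow> bool) \<Rightarrow> bool" where
  "is_lattice L le \<longleftrightarrow> partial_order_on' L le \<and>
     (\<forall>x\<in>L. \<forall>y\<in>L. (\<exists>s. is_lub L le x y s) \<and> (\<exists>m. is_glb L le x y m))"

definition bounded_lattice :: "'a set \<Rightarrow> ('a \<Rightarrow> 'a \<Rightarrow> bool) \<Rightarrow> bool" where
  "bounded_lattice L le \<longleftrightarrow> is_lattice L le \<and>
     (\<exists>a. is_least L le a) \<and> (\<exists>b. is_greatest L le b)"

definition ljoin :: "'a set \<Rightarrow> ('a \<Rightarrow> 'a \<Rightarrow> bool) \<Rightarrow> 'a \<Rightarrow> 'a \<Rightarrow> 'a" where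
  "ljoin L le x y = (THE s. is_lub L le x y s)"

definition lmeet :: "'a set \<Rightarrow> ('a \<Rightarrow> 'a \<Rightarrow> bool) \<Rightarrow> 'a \<Rightarrow> 'a \<Rightarrow> 'a" where
  "lmeet L le x y = (THE m. is_glb L le x y m)"

definition zo_sublattice :: "'a set \<Rightarrow> 'a set \<Rightarrow> ('a \<Rightarrow> 'a \<Rightarrow> bool) \<Rightarrow> bool" where
  "zo_sublattice L0 L1 le \<longleftrightarrow> L0 \<subseteq> L1 \<and>
     (\<forall>x\<in>L0. \<forall>y\<in>L0. ljoin L1 le x y \<in> L0 \<and> lmeet L1 le x y \<in> L0) \<and>
     (\<forall>a. is_least L1 le a \<longrightarrow> a \<in> L0) \<and>
     (\<forall>b. is_greatest L1 le b \<longrightarrow> b \<in> L0)"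

definition lattice_congruence :: "'a set \<Rightarrow> ('a \<Rightarrow> 'a \<Rightarrow> bool) \<Rightarrow> ('a \<times> 'a) set \<Rightarrow> bool" where
  "lattice_congruence L le \<theta> \<longleftrightarrow> equiv L \<theta> \<and>
     (\<forall>a b c d. (a, b) \<in> \<theta> \<and> (c, d) \<in> \<theta> \<longrightarrow>
        (ljoin L le a c, ljoin L le b d) \<in> \<theta> \<and> (lmeet L le a c, lmeet L le b d) \<in> \<theta>)"

definition con :: "'a set \<Rightarrow> ('a \<Rightarrow> 'a \<Rightarrow> bool) \<Rightarrow> 'a \<Rightarrow> 'a \<Rightarrow> ('a \<times> 'a) set" where
  "con L le x y = \<Inter> {\<theta>. lattice_congruence L le \<theta> \<and> (x, y) \<in> \<theta>}"

definition Princ :: "'a set \<Rightarrow> ('a \<Rightarrow> 'a \<Rightarrow> bool) \<Rightarrow> ('a \<times> 'a) set set" where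
  "Princ L le = {con L le x y | x y. x \<in> L \<and> y \<in> L}"

definition order_iso_Princ ::
  "'b set \<Rightarrow> ('b \<Rightarrow> 'b \<Rightarrow> bool) \<Rightarrow> 'a set \<Rightarrow> ('a \<Rightarrow> 'a \<Rightarrow> bool) \<Rightarrow> ('b \<Rightarrow> ('a \<times> 'a) set) \<Rightarrow> bool" where
  "order_iso_Princ P leP L le \<xi> \<longleftrightarrow> bij_betw \<xi> P (Princ L le) \<and>
     (\<forall>x\<in>P. \<forall>y\<in>P. leP x y \<longleftrightarrow> \<xi> x \<subseteq> \<xi> y)"

end

theory Submission
  imports Defs
begin

datatype 'c el = eBot | eTop | eZ nat | eA 'c | eB 'c | eD 'c 'c | eE 'c 'c | eT 'c 'c | eS 'c 'c | eU 'c 'c | eW 'c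

fun hA :: "'c \<Rightarrow> 'c el \<Rightarrow> bool" where
  "hA m eTop = True" | "hA m (eA i) = (m = i)" | "hA m (eB i) = (m = i)"
| "hA m (eD i j) = (m = i \<or> m = j)" | "hA m (eE i j) = (m = i \<or> m = j)" | "hA m (eT i j) = (m = i \<or> m = j)"
| "hA m (eS i j) = (m = i \<or> m = j)" | "hA m (eU i j) = (m = i \<or> m = j)" | "hA m (eW i) = (m = i)"
| "hA m _ = False"
fun hB :: "'c \<Rightarrow> 'c el \<Rightarrow> bool" where
  "hB m eTop = True" | "hB m (eB i) = (m = i)" | "hB m (eE i j) = (m = i)" | "hB m (eT i j) = (m = i \<or> m = j)"
| "hB m (eU i j) = (m = i \<or> m = j)" | "hB m _ = False"
fun hW :: "'c \<Rightarrow> 'c el \<Rightarrow> bool" where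
  "hW m eTop = True" | "hW m (eW i) = (m = i)" | "hW m _ = False"
fun hZ :: "nat \<Rightarrow> 'c el \<Rightarrow> bool" where
  "hZ k eTop = True" | "hZ k (eZ n) = (k = n)" | "hZ k _ = False"

fun leq :: "'c el \<Rightarrow> 'c el \<Rightarrow> bool" where
  "leq eBot y = True" | "leq eTop y = (y = eTop)" | "leq (eZ n) y = hZ n y"
| "leq (eA i) y = hA i y" | "leq (eB i) y = hB i y"
| "leq (eD i j) y = (hA i y \<and> hA j y)" | "leq (eE i j) y = (hB i y \<and> hA j y)"
| "leq (eT i j) y = (hB i y \<and> hB j y)" | "leq (eS i j) y = (hA i y \<and> hA j y)"
| "leq (eU i j) y = (hB i y \<and> hB j y)" | "leq (eW i) y = hW i y"

fun valid :: "'c set \<Rightarrow> ('c\<times>'c) set \<Rightarrow> ('c\<times>'c) set \<Rightarrow> 'c set \<Rightarrow> 'c el \<Rightarrow> bool" where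
  "valid I G Sy Wt eBot = True" | "valid I G Sy Wt eTop = True" | "valid I G Sy Wt (eZ n) = (n < 3)"
| "valid I G Sy Wt (eA i) = (i \<in> I)" | "valid I G Sy Wt (eB i) = (i \<in> I)"
| "valid I G Sy Wt (eD i j) = ((i,j) \<in> G)" | "valid I G Sy Wt (eE i j) = ((i,j) \<in> G)" | "valid I G Sy Wt (eT i j) = ((i,j) \<in> G)"
| "valid I G Sy Wt (eS i j) = ((i,j) \<in> Sy)" | "valid I G Sy Wt (eU i j) = ((i,j) \<in> Sy)"
| "valid I G Sy Wt (eW i) = (i \<in> Wt)"

fun jx :: "('c\<times>'c) set \<Rightarrow> ('c\<times>'c) set \<Rightarrow> 'c el \<Rightarrow> 'c el \<Rightarrow> 'c el" where
  "jx G Sy (eA i) (eA j) = (if (i,j)\<in>G then eD i j else if (i,j)\<in>Sy then eS i j else eTop)"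
| "jx G Sy (eA i) (eB j) = (if (j,i)\<in>G then eE j i else if (i,j)\<in>G then eT i j else if (i,j)\<in>Sy then eU i j else if (j,i)\<in>Sy then eU j i else eTop)"
| "jx G Sy (eB i) (eB j) = (if (i,j)\<in>G then eT i j else if (i,j)\<in>Sy then eU i j else eTop)"
| "jx G Sy (eB k) (eD i j) = (if k=i then eE i j else if k=j then eT i j else eTop)"
| "jx G Sy (eB k) (eE i j) = (if k=j then eT i j else eTop)"
| "jx G Sy (eB k) (eS i j) = (if k=i \<or> k=j then eU i j else eTop)"
| "jx G Sy _ _ = eTop"

definition jn :: "('c\<times>'c) set \<Rightarrow> ('c\<times>'c) set \<Rightarrow> 'c el \<Rightarrow> 'c el \<Rightarrow> 'c el" where
  "jn G Sy x y = (if leq x y then y else if leq y x then x else if jx G Sy x y \<noteq> eTop then jx G Sy x y else jx G Sy y x)"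

fun fi :: "'c el \<Rightarrow> 'c" where
  "fi (eA i) = i" | "fi (eB i) = i" | "fi (eD i j) = i" | "fi (eE i j) = i" | "fi (eT i j) = i"
| "fi (eS i j) = i" | "fi (eU i j) = i" | "fi (eW i) = i" | "fi _ = undefined"
fun se :: "'c el \<Rightarrow> 'c" where
  "se (eA i) = i" | "se (eB i) = i" | "se (eD i j) = j" | "se (eE i j) = j" | "se (eT i j) = j"
| "se (eS i j) = j" | "se (eU i j) = j" | "se (eW i) = i" | "se _ = undefined"

definition lev :: "'c el \<Rightarrow> 'c \<Rightarrow> nat" where
  "lev x m = (if hB m x then 2 else if hA m x then 1 else 0)"
definition lv :: "'c \<Rightarrow> nat \<Rightarrow> 'c el" where
  "lv m n = (if n = 0 then eBot else if n = 1 then eA m else eB m)"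

fun isZ :: "'c el \<Rightarrow> bool" where "isZ (eZ n) = True" | "isZ _ = False"

definition mt :: "'c el \<Rightarrow> 'c el \<Rightarrow> 'c el" where
  "mt x y = (if leq x y then x else if leq y x then y else
     if isZ x \<or> isZ y then eBot else
     if hA (fi x) y then lv (fi x) (min (lev x (fi x)) (lev y (fi x)))
     else if hA (se x) y then lv (se x) (min (lev x (se x)) (lev y (se x))) else eBot)"

lemma leq_refl[simp]: "leq x x"
  by (cases x) auto
lemma hB_hA: "hB m y \<Longrightarrow> hA m y" by (cases y) auto
lemma hW_hA: "hW m y \<Longrightarrow> hA m y" by (cases y) auto
lemma leq_char: "leq x y \<longleftrightarrow> (\<forall>m. (hA m x \<longrightarrow> hA m y) \<and> (hB m x \<longrightarrow> hB m y) \<and> (hW m x \<longrightarrow> hW m y))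
   \<and> (\<forall>k. hZ k x \<longrightarrow> hZ k y) \<and> (x = eTop \<longrightarrow> y = eTop)"
  by (cases x) (auto dest: hB_hA hW_hA)
lemma leq_trans: "leq x y \<Longrightarrow> leq y z \<Longrightarrow> leq x z"
  unfolding leq_char by blast

locale glat =
  fixes I :: "'c set" and G Sy :: "('c\<times>'c) set" and Wt :: "'c set"
  assumes G_sub: "(i,j)\<in>G \<Longrightarrow> i \<in> I \<and> j \<in> I"
    and G_irr: "(i,j)\<in>G \<Longrightarrow> i \<noteq> j"
    and G_asym: "(i,j)\<in>G \<Longrightarrow> (j,i)\<notin>G"
    and G_Sy: "(i,j)\<in>G \<Longrightarrow> (i,j)\<notin>Sy \<and> (j,i)\<notin>Sy"
    and Sy_sub: "(i,j)\<in>Sy \<Longrightarrow> i \<in> I \<and> j \<in> I"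
    and Sy_irr: "(i,j)\<in>Sy \<Longrightarrow> i \<noteq> j"
    and Sy_asym: "(i,j)\<in>Sy \<Longrightarrow> (j,i)\<notin>Sy"
    and W_sub: "i \<in> Wt \<Longrightarrow> i \<in> I"
begin
abbreviation "V \<equiv> valid I G Sy Wt"
abbreviation "J \<equiv> jn G Sy"

lemma antisym: "V x \<Longrightarrow> V y \<Longrightarrow> leq x y \<Longrightarrow> leq y x \<Longrightarrow> x = y"
  apply (cases x; cases y)
  apply (simp_all)
  apply (auto dest: G_irr G_asym G_Sy Sy_irr Sy_asym)
  done




lemma join_least: "V x \<Longrightarrow> V y \<Longrightarrow> V z \<Longrightarrow> leq x z \<Longrightarrow> leq y z \<Longrightarrow> leq (J x y) z"
  apply (cases x; cases y)
  apply (simp_all add: jn_def)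
  apply (case_tac [!] z)
  apply (simp_all)
  apply (auto dest: G_irr G_asym G_Sy Sy_irr Sy_asym)
  done
lemma join_ub: "V x \<Longrightarrow> V y \<Longrightarrow> leq x (J x y) \<and> leq y (J x y) \<and> V (J x y)"
  apply (cases x; cases y)
  apply (simp_all add: jn_def)
  apply ((auto dest: G_sub Sy_sub)?)
  done

lemma meet_lb: "V x \<Longrightarrow> V y \<Longrightarrow> leq (mt x y) x \<and> leq (mt x y) y \<and> V (mt x y)"
  apply (cases x; cases y)
  apply (simp_all add: mt_def lev_def lv_def)
  apply ((auto dest: G_sub Sy_sub W_sub)?)
  done

lemma meet_glb: "V x \<Longrightarrow> V y \<Longrightarrow> V z \<Longrightarrow> leq z x \<Longrightarrow> leq z y \<Longrightarrow> leq z (mt x y)"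
  apply (cases x; cases y)
  apply (simp_all add: mt_def lev_def lv_def)
  apply (case_tac [!] z)
  apply (simp_all)
  apply (auto dest: G_irr G_asym G_Sy Sy_irr Sy_asym)
  done
end

definition lclosed :: "'a set \<Rightarrow> ('a \<Rightarrow> 'a \<Rightarrow> bool) \<Rightarrow> bool" where
  "lclosed L le \<longleftrightarrow> (\<forall>a\<in>L. \<forall>c\<in>L. ljoin L le a c \<in> L \<and> lmeet L le a c \<in> L)"
lemma full_cong: "lclosed L le \<Longrightarrow> lattice_congruence L le (L \<times> L)"
  unfolding lattice_congruence_def lclosed_def equiv_def refl_on_def sym_def trans_def by auto

lemma con_cong:
  assumes "lclosed L le" "x \<in> L" "y \<in> L"
  shows "lattice_congruence L le (con L le x y)"
proof -
  define F where "F = {\<theta>. lattice_congruence L le \<theta> \<and> (x, y) \<in> \<theta>}"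
  have ne: "L \<times> L \<in> F" using full_cong[OF assms(1)] assms by (auto simp: F_def)
  have sub: "\<Inter>F \<subseteq> L \<times> L" using ne by blast
  have refl: "refl_on L (\<Inter>F)"
    unfolding refl_on_def by (auto simp: F_def lattice_congruence_def equiv_def refl_on_def)
  have sym: "sym (\<Inter>F)"
    unfolding sym_def by (auto simp: F_def lattice_congruence_def equiv_def sym_def)
  have trans: "trans (\<Inter>F)"
  proof (rule transI)
    fix a b c assume "(a,b) \<in> \<Inter>F" "(b,c) \<in> \<Inter>F"
    then show "(a,c) \<in> \<Inter>F" unfolding F_def lattice_congruence_def equiv_def
      by (auto dest: transD)
  qed
  have comp: "\<forall>a b c d. (a, b) \<in> \<Inter>F \<and> (c, d) \<in> \<Inter>F \<longrightarrow>
        (ljoin L le a c, ljoin L le b d) \<in> \<Inter>F \<and> (lmeet L le a c, lmeet L le b d) \<in> \<Inter>F"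
    by (auto simp: F_def lattice_congruence_def)
  have "lattice_congruence L le (\<Inter>F)"
    unfolding lattice_congruence_def equiv_def using sub refl sym trans comp by simp
  then show ?thesis unfolding con_def F_def .
qed

lemma con_mem: "x \<in> L \<Longrightarrow> y \<in> L \<Longrightarrow> lclosed L le \<Longrightarrow> (x, y) \<in> con L le x y"
  unfolding con_def by (rule InterI) simp

lemma con_least: "lattice_congruence L le \<theta> \<Longrightarrow> (x, y) \<in> \<theta> \<Longrightarrow> con L le x y \<subseteq> \<theta>"
  unfolding con_def by (rule Inter_lower) simp

lemma cong_sub: "lattice_congruence L le \<theta> \<Longrightarrow> \<theta> \<subseteq> L \<times> L"
  unfolding lattice_congruence_def equiv_def by simp
lemma cong_refl: "lattice_congruence L le \<theta> \<Longrightarrow> a \<in> L \<Longrightarrow> (a,a) \<in> \<theta>"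
  unfolding lattice_congruence_def equiv_def refl_on_def by simp
lemma cong_sym: "lattice_congruence L le \<theta> \<Longrightarrow> (a,b) \<in> \<theta> \<Longrightarrow> (b,a) \<in> \<theta>"
  unfolding lattice_congruence_def equiv_def by (meson symD)
lemma cong_trans: "lattice_congruence L le \<theta> \<Longrightarrow> (a,b) \<in> \<theta> \<Longrightarrow> (b,c) \<in> \<theta> \<Longrightarrow> (a,c) \<in> \<theta>"
  unfolding lattice_congruence_def equiv_def by (meson transD)
lemma cong_join: "lattice_congruence L le \<theta> \<Longrightarrow> (a,b) \<in> \<theta> \<Longrightarrow> c \<in> L \<Longrightarrow>
   (ljoin L le a c, ljoin L le b c) \<in> \<theta>"
  using cong_refl[of L le \<theta> c] unfolding lattice_congruence_def by blast
lemma cong_meet: "lattice_congruence L le \<theta> \<Longrightarrow> (a,b) \<in> \<theta> \<Longrightarrow> c \<in> L \<Longrightarrow>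
   (lmeet L le a c, lmeet L le b c) \<in> \<theta>"
  using cong_refl[of L le \<theta> c] unfolding lattice_congruence_def by blast

lemma con_eqI: "lclosed L le \<Longrightarrow> x \<in> L \<Longrightarrow> y \<in> L \<Longrightarrow> u \<in> L \<Longrightarrow> v \<in> L \<Longrightarrow>
  (u, v) \<in> con L le x y \<Longrightarrow> (x, y) \<in> con L le u v \<Longrightarrow> con L le x y = con L le u v"
  by (intro subset_antisym con_least con_cong) auto

lemma con_subI: "lclosed L le \<Longrightarrow> x \<in> L \<Longrightarrow> y \<in> L \<Longrightarrow> 
  (u, v) \<in> con L le x y \<Longrightarrow> con L le u v \<subseteq> con L le x y"
  by (intro con_least con_cong)

context glat begin

abbreviation "C \<equiv> {x. V x}"

lemma po: "partial_order_on' C leq"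
  unfolding partial_order_on'_def by (auto intro: antisym leq_trans)

lemma is_lub_J: "V x \<Longrightarrow> V y \<Longrightarrow> is_lub C leq x y (J x y)"
  unfolding is_lub_def using join_ub[of x y] join_least[of x y] by auto

lemma is_glb_mt: "V x \<Longrightarrow> V y \<Longrightarrow> is_glb C leq x y (mt x y)"
  unfolding is_glb_def using meet_lb[of x y] meet_glb[of x y] by auto

lemma ljoin_eq[simp]: "V x \<Longrightarrow> V y \<Longrightarrow> ljoin C leq x y = J x y"
  unfolding ljoin_def
  apply (rule the_equality)
   apply (rule is_lub_J, assumption+)
  using is_lub_J[of x y] antisym[of _ "J x y"] unfolding is_lub_def by auto

lemma lmeet_eq[simp]: "V x \<Longrightarrow> V y \<Longrightarrow> lmeet C leq x y = mt x y"
  unfolding lmeet_def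
  apply (rule the_equality)
   apply (rule is_glb_mt, assumption+)
  using is_glb_mt[of x y] antisym[of _ "mt x y"] unfolding is_glb_def by auto

lemma lclosed: "lclosed C leq"
  unfolding lclosed_def using join_ub meet_lb by simp

lemma leq_top[simp]: "leq x eTop" by (cases x) auto

lemma bounded: "bounded_lattice C leq"
proof -
  have 1: "\<forall>x\<in>C. \<forall>y\<in>C. (\<exists>s. is_lub C leq x y s) \<and> (\<exists>m. is_glb C leq x y m)"
    using is_lub_J is_glb_mt by blast
  have 2: "is_least C leq eBot" by (simp add: is_least_def)
  have 3: "is_greatest C leq eTop" by (simp add: is_greatest_def)
  show ?thesis unfolding bounded_lattice_def is_lattice_def using po 1 2 3 by blast
qed

lemma least_iff: "is_least C leq a \<longleftrightarrow> a = eBot"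
  unfolding is_least_def using antisym[of a eBot] by auto
lemma greatest_iff: "is_greatest C leq a \<longleftrightarrow> a = eTop"
  unfolding is_greatest_def by (auto dest: spec[of _ eTop])

abbreviation "cg \<equiv> lattice_congruence C leq"
abbreviation "cn \<equiv> con C leq"

lemma cgJ: assumes "cg \<theta>" "(a,b) \<in> \<theta>" "V c" shows "(J a c, J b c) \<in> \<theta>"
  using cong_join[OF assms(1,2), of c] cong_sub[OF assms(1)] assms(2,3) by (auto simp: subset_iff)
lemma cgM: assumes "cg \<theta>" "(a,b) \<in> \<theta>" "V c" shows "(mt a c, mt b c) \<in> \<theta>"
  using cong_meet[OF assms(1,2), of c] cong_sub[OF assms(1)] assms(2,3) by (auto simp: subset_iff)

lemma cn_cg: "V x \<Longrightarrow> V y \<Longrightarrow> cg (cn x y)"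
  by (rule con_cong[OF lclosed]) simp_all
lemma cn_mem: "V x \<Longrightarrow> V y \<Longrightarrow> (x, y) \<in> cn x y"
  by (rule con_mem[OF _ _ lclosed]) simp_all
lemma cn_eqI: "V x \<Longrightarrow> V y \<Longrightarrow> V u \<Longrightarrow> V v \<Longrightarrow> (u, v) \<in> cn x y \<Longrightarrow> (x, y) \<in> cn u v \<Longrightarrow> cn x y = cn u v"
  by (rule con_eqI[OF lclosed]) simp_all
lemma cn_subI: "V x \<Longrightarrow> V y \<Longrightarrow> (u, v) \<in> cn x y \<Longrightarrow> cn u v \<subseteq> cn x y"
  by (rule con_subI[OF lclosed]) simp_all

end

fun col :: "'c el \<Rightarrow> 'c el \<Rightarrow> 'c option" where
  "col (eA i) (eB j) = (if i = j then Some i else None)"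
| "col (eD i j) (eE k l) = (if i = k \<and> j = l then Some i else None)"
| "col (eE i j) (eT k l) = (if i = k \<and> j = l then Some j else None)"
| "col (eD i j) (eT k l) = (if i = k \<and> j = l then Some j else None)"
| "col (eS i j) (eU k l) = (if i = k \<and> j = l then Some i else None)"
| "col _ _ = None"

definition oth :: "'c el \<Rightarrow> 'c \<Rightarrow> 'c" where "oth y i = (if fi y = i then se y else fi y)"

context glat begin

lemma mt_top[simp]: "mt x eTop = x" by (simp add: mt_def)
lemma mt_bot[simp]: "mt x eBot = eBot" by (cases x) (simp_all add: mt_def)
lemma mt_top2[simp]: "mt eTop x = x" by (cases x) (simp_all add: mt_def)
lemma mt_bot2[simp]: "mt eBot x = eBot" by (simp add: mt_def)
lemma J_bot[simp]: "J eBot x = x" by (simp add: jn_def)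
lemma J_bot2[simp]: "J x eBot = x" by (cases x) (simp_all add: jn_def)
lemma J_top[simp]: "J eTop x = eTop" by (cases x) (simp_all add: jn_def)
lemma J_top2[simp]: "J x eTop = eTop" by (simp add: jn_def)

lemma le_simps: "V x \<Longrightarrow> V z \<Longrightarrow> leq x z \<Longrightarrow> mt x z = x \<and> mt z x = x \<and> J x z = z \<and> J z x = z"
  using antisym[of x z] by (auto simp: mt_def jn_def)

lemma all_BT: assumes "cg \<theta>" "(eBot, eTop) \<in> \<theta>" shows "\<theta> = C \<times> C"
proof
  show "\<theta> \<subseteq> C \<times> C" using cong_sub[OF assms(1)] by simp
  show "C \<times> C \<subseteq> \<theta>"
  proof clarify
    fix x y assume x: "V x" and y: "V y"
    have "(mt eBot x, mt eTop x) \<in> \<theta>" by (rule cgM[OF assms x])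
    then have 1: "(eBot, x) \<in> \<theta>" using le_simps[of eBot x] x by simp
    have "(mt eBot y, mt eTop y) \<in> \<theta>" by (rule cgM[OF assms y])
    then have 2: "(eBot, y) \<in> \<theta>" using le_simps[of eBot y] y by simp
    show "(x, y) \<in> \<theta>" by (meson 1 2 assms(1) cong_sym cong_trans)
  qed
qed

lemma all_ZT: assumes "cg \<theta>" "(eZ k, eTop) \<in> \<theta>" "k < 3" shows "\<theta> = C \<times> C"
proof -
  define k1 where "k1 = (k + 1) mod 3"
  define k2 where "k2 = (k + 2) mod 3"
  have k: "k1 < 3" "k2 < 3" "k1 \<noteq> k" "k2 \<noteq> k" "k1 \<noteq> k2"
    using \<open>k < 3\<close> unfolding k1_def k2_def by presburger+
  have "(mt (eZ k) (eZ k2), mt eTop (eZ k2)) \<in> \<theta>" by (rule cgM[OF assms(1,2)]) (simp add: k)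
  then have a: "(eBot, eZ k2) \<in> \<theta>" using k by (simp add: mt_def)
  have "(mt (eZ k) (eZ k1), mt eTop (eZ k1)) \<in> \<theta>" by (rule cgM[OF assms(1,2)]) (simp add: k)
  then have "(eBot, eZ k1) \<in> \<theta>" using k by (simp add: mt_def)
  then have "(J eBot (eZ k2), J (eZ k1) (eZ k2)) \<in> \<theta>" by (rule cgJ[OF assms(1)]) (simp add: k)
  then have b: "(eZ k2, eTop) \<in> \<theta>" using k by (simp add: jn_def)
  show ?thesis using all_BT[OF assms(1) cong_trans[OF assms(1) a b]] .
qed

lemma all_Bot: assumes "cg \<theta>" "(eBot, w) \<in> \<theta>" "V w" "w \<noteq> eBot" shows "\<theta> = C \<times> C"
proof -
  define k where "k = (if w = eZ 0 then 1 else (0::nat))"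
  have k: "k < 3" "w \<noteq> eZ k" by (auto simp: k_def)
  have "(J eBot (eZ k), J w (eZ k)) \<in> \<theta>" by (rule cgJ[OF assms(1,2)]) (simp add: k)
  moreover have "J eBot (eZ k) = eZ k" by (simp add: jn_def)
  moreover have "J w (eZ k) = eTop" using k assms(3,4) by (cases w) (auto simp: jn_def)
  ultimately show ?thesis using all_ZT[OF assms(1) _ k(1)] by simp
qed

lemma all_Top: assumes "cg \<theta>" "(w, eTop) \<in> \<theta>" "V w" "w \<noteq> eTop" shows "\<theta> = C \<times> C"
proof -
  define k where "k = (if w = eZ 0 then 1 else (0::nat))"
  have k: "k < 3" "w \<noteq> eZ k" by (auto simp: k_def)
  have "(mt w (eZ k), mt eTop (eZ k)) \<in> \<theta>" by (rule cgM[OF assms(1,2)]) (simp add: k)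
  moreover have "mt w (eZ k) = eBot" using k assms(3,4) by (cases w) (auto simp: mt_def)
  ultimately show ?thesis using all_Bot[OF assms(1), of "eZ k"] k by (simp add: mt_def)
qed

lemma Id_cg: "cg (Id_on C)"
  unfolding lattice_congruence_def
proof (intro conjI allI impI)
  show "equiv C (Id_on C)" by (rule equivI) (auto simp: refl_on_def sym_def trans_def)
  fix a b c d assume "(a, b) \<in> Id_on C \<and> (c, d) \<in> Id_on C"
  then have h: "a = b" "c = d" "V a" "V c" by auto
  show "(ljoin C leq a c, ljoin C leq b d) \<in> Id_on C"
    using h join_ub[of a c] by (auto simp: Id_on_def)
  show "(lmeet C leq a c, lmeet C leq b d) \<in> Id_on C"
    using h meet_lb[of a c] by (auto simp: Id_on_def)
qed

lemma cn_self: assumes "V x" shows "cn x x = Id_on C"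
proof
  show "cn x x \<subseteq> Id_on C" by (rule con_least[OF Id_cg]) (rule Id_onI, simp add: \<open>V x\<close>)
  show "Id_on C \<subseteq> cn x x" using cong_refl[OF cn_cg[OF \<open>V x\<close> \<open>V x\<close>]] by auto
qed

lemma cn_mJ: assumes x: "V x" and y: "V y" shows "cn x y = cn (mt x y) (J x y)"
proof -
  have m: "V (mt x y)" "leq (mt x y) x" "leq (mt x y) y" using meet_lb[OF x y] by auto
  have j: "V (J x y)" "leq x (J x y)" "leq y (J x y)" using join_ub[OF x y] by auto
  have c1: "cg (cn x y)" "(x,y) \<in> cn x y" using cn_cg cn_mem x y by auto
  have "(mt x y, mt y y) \<in> cn x y" by (rule cgM[OF c1 y])
  then have a: "(mt x y, y) \<in> cn x y" using le_simps[of y y] y by simp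
  have "(J x y, J y y) \<in> cn x y" by (rule cgJ[OF c1 y])
  then have b: "(J x y, y) \<in> cn x y" using le_simps[of y y] y by simp
  have u: "(mt x y, J x y) \<in> cn x y" using a b c1(1) cong_sym cong_trans by metis
  have c2: "cg (cn (mt x y) (J x y))" "(mt x y, J x y) \<in> cn (mt x y) (J x y)" using cn_cg cn_mem m j by auto
  have "(mt (mt x y) x, mt (J x y) x) \<in> cn (mt x y) (J x y)" by (rule cgM[OF c2 x])
  then have p: "(mt x y, x) \<in> cn (mt x y) (J x y)" using le_simps[OF m(1) x m(2)] le_simps[OF x j(1) j(2)] by simp
  have "(mt (mt x y) y, mt (J x y) y) \<in> cn (mt x y) (J x y)" by (rule cgM[OF c2 y])
  then have q: "(mt x y, y) \<in> cn (mt x y) (J x y)" using le_simps[OF m(1) y m(3)] le_simps[OF y j(1) j(3)] by simp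
  have v: "(x, y) \<in> cn (mt x y) (J x y)" using p q c2(1) cong_sym cong_trans by metis
  show ?thesis by (rule cn_eqI[OF x y m(1) j(1) u v])
qed

end

fun pi :: "'c set \<Rightarrow> 'c el \<Rightarrow> 'c el" where
  "pi K (eB i) = (if i \<in> K then eA i else eB i)"
| "pi K (eE i j) = (if i \<in> K then eD i j else eE i j)"
| "pi K (eT i j) = (if i \<in> K \<and> j \<in> K then eD i j else eT i j)"
| "pi K (eU i j) = (if i \<in> K \<and> j \<in> K then eS i j else eU i j)"
| "pi K x = x"

context glat begin

lemma perspI:
  assumes "V x" "V y" "V u" "V v" "V c" "V d" "mt x c = u" "mt y c = v" "J u d = x" "J v d = y"
  shows "cn x y = cn u v"
proof (rule cn_eqI)
  show "(u, v) \<in> cn x y" using cgM[OF cn_cg[OF assms(1,2)] cn_mem[OF assms(1,2)] assms(5)] assms by simp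
  show "(x, y) \<in> cn u v" using cgJ[OF cn_cg[OF assms(3,4)] cn_mem[OF assms(3,4)] assms(6)] assms by simp
qed (use assms in auto)

lemma colDE: "(i,j) \<in> G \<Longrightarrow> cn (eD i j) (eE i j) = cn (eA i) (eB i)"
  by (rule perspI[where c="eB i" and d="eD i j"]) (auto simp: mt_def jn_def lev_def lv_def dest: G_sub G_irr)
lemma colET: "(i,j) \<in> G \<Longrightarrow> cn (eE i j) (eT i j) = cn (eA j) (eB j)"
  by (rule perspI[where c="eB j" and d="eE i j"]) (auto simp: mt_def jn_def lev_def lv_def dest: G_sub G_irr)
lemma colDT: "(i,j) \<in> G \<Longrightarrow> cn (eD i j) (eT i j) = cn (eA j) (eB j)"
  by (rule perspI[where c="eB j" and d="eD i j"]) (auto simp: mt_def jn_def lev_def lv_def dest: G_sub G_irr)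
lemma colSU: "(i,j) \<in> Sy \<Longrightarrow> cn (eS i j) (eU i j) = cn (eA i) (eB i)"
  by (rule perspI[where c="eB i" and d="eS i j"]) (auto simp: mt_def jn_def lev_def lv_def dest: Sy_sub Sy_irr)
lemma colSU2: "(i,j) \<in> Sy \<Longrightarrow> cn (eS i j) (eU i j) = cn (eA j) (eB j)"
  by (rule perspI[where c="eB j" and d="eS i j"]) (auto simp: mt_def jn_def lev_def lv_def dest: Sy_sub Sy_irr)

lemma G_mono: assumes "(i,j) \<in> G" shows "cn (eA i) (eB i) \<subseteq> cn (eA j) (eB j)"
proof -
  have v: "V (eD i j)" "V (eE i j)" "V (eT i j)" using assms by auto
  have "(mt (eD i j) (eE i j), mt (eT i j) (eE i j)) \<in> cn (eD i j) (eT i j)"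
    by (rule cgM[OF cn_cg cn_mem]) (use v in auto)
  then have "(eD i j, eE i j) \<in> cn (eD i j) (eT i j)" using G_irr[OF assms] by (simp add: mt_def lev_def lv_def)
  then have "cn (eD i j) (eE i j) \<subseteq> cn (eD i j) (eT i j)" by (rule cn_subI[OF v(1,3)])
  then show ?thesis using colDE[OF assms] colDT[OF assms] by simp
qed

lemma Sy_eq: "(i,j) \<in> Sy \<Longrightarrow> cn (eA i) (eB i) = cn (eA j) (eB j)"
  using colSU colSU2 by metis

lemma W_all: assumes "i \<in> Wt" shows "cn (eA i) (eB i) = C \<times> C"
proof -
  have v: "V (eA i)" "V (eB i)" "V (eW i)" using assms W_sub by auto
  have "(J (eA i) (eW i), J (eB i) (eW i)) \<in> cn (eA i) (eB i)"
    by (rule cgJ[OF cn_cg cn_mem]) (use v in auto)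
  then have "(eW i, eTop) \<in> cn (eA i) (eB i)" by (simp add: jn_def)
  then show ?thesis by (rule all_Top[OF cn_cg[OF v(1,2)]]) (use v in auto)
qed

lemma colored: assumes "V x" "V y" "col x y = Some i"
  shows "i \<in> I \<and> cn x y = cn (eA i) (eB i)"
  using assms
  apply (cases x; cases y)
  apply (simp_all split: if_splits)
  apply (auto simp: colDE colET colDT colSU dest: G_sub Sy_sub)
  done

lemma wit: "V x \<Longrightarrow> V y \<Longrightarrow> leq x y \<Longrightarrow> x \<noteq> y \<Longrightarrow> col x y = None \<Longrightarrow> x \<noteq> eBot \<Longrightarrow> y \<noteq> eTop \<Longrightarrow>
   (V (eB (oth y (fi x))) \<and> mt x (eB (oth y (fi x))) = eBot \<and> mt y (eB (oth y (fi x))) \<noteq> eBot) \<or>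
   (V (eB (fi x)) \<and> J x (eB (fi x)) \<noteq> eTop \<and> J y (eB (fi x)) = eTop)"
  apply (cases x; cases y)
  apply (simp_all add: oth_def)
  apply (auto simp: mt_def jn_def lev_def lv_def dest: G_sub G_irr G_asym Sy_sub Sy_irr W_sub G_Sy Sy_asym)
  done

lemma uncol: assumes "V x" "V y" "leq x y" "x \<noteq> y" "col x y = None" shows "cn x y = C \<times> C"
proof -
  have c: "cg (cn x y)" "(x,y) \<in> cn x y" using cn_cg cn_mem assms by auto
  show ?thesis
  proof (cases "x = eBot")
    case True then show ?thesis using all_Bot[OF c(1)] c(2) assms by auto
  next
    case xb: False
    show ?thesis
    proof (cases "y = eTop")
      case True then show ?thesis using all_Top[OF c(1)] c(2) assms by auto
    next
      case False
      show ?thesis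
      proof (cases "V (eB (oth y (fi x))) \<and> mt x (eB (oth y (fi x))) = eBot \<and> mt y (eB (oth y (fi x))) \<noteq> eBot")
        case True
        then have "(eBot, mt y (eB (oth y (fi x)))) \<in> cn x y" using cgM[OF c, of "eB (oth y (fi x))"] by simp
        then show ?thesis using all_Bot[OF c(1)] True meet_lb assms(2) by blast
      next
        case nt: False
        then have w: "V (eB (fi x)) \<and> J x (eB (fi x)) \<noteq> eTop \<and> J y (eB (fi x)) = eTop"
          using wit[OF assms xb False] by blast
        then have "(J x (eB (fi x)), eTop) \<in> cn x y" using cgJ[OF c, of "eB (fi x)"] by simp
        then show ?thesis using all_Top[OF c(1)] w join_ub assms(1) by blast
      qed
    qed
  qed
qed

lemma classify: assumes "V x" "V y" "x \<noteq> y"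
  shows "(case col (mt x y) (J x y) of None \<Rightarrow> cn x y = C \<times> C | Some i \<Rightarrow> i \<in> I \<and> cn x y = cn (eA i) (eB i))"
proof -
  have m: "V (mt x y)" "leq (mt x y) x" "leq (mt x y) y" using meet_lb assms by auto
  have j: "V (J x y)" "leq x (J x y)" "leq y (J x y)" using join_ub assms by auto
  have ne: "mt x y \<noteq> J x y"
  proof
    assume "mt x y = J x y"
    then have "leq x y" "leq y x" using m j leq_trans by metis+
    then show False using antisym assms by blast
  qed
  have le: "leq (mt x y) (J x y)" using m j leq_trans by blast
  show ?thesis
  proof (cases "col (mt x y) (J x y)")
    case None then show ?thesis using uncol[OF m(1) j(1) le ne None] cn_mJ[OF assms(1,2)] by simp
  next
    case (Some i) then show ?thesis using colored[OF m(1) j(1) Some] cn_mJ[OF assms(1,2)] by simp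
  qed
qed

end

context glat begin

definition Kok :: "'c set \<Rightarrow> bool" where
  "Kok K \<longleftrightarrow> (\<forall>i j. (i,j) \<in> G \<longrightarrow> j \<in> K \<longrightarrow> i \<in> K) \<and> (\<forall>i j. (i,j) \<in> Sy \<longrightarrow> (i \<in> K \<longleftrightarrow> j \<in> K))
     \<and> (\<forall>i\<in>Wt. i \<notin> K)"

definition thK :: "'c set \<Rightarrow> ('c el \<times> 'c el) set" where
  "thK K = {(x,y). V x \<and> V y \<and> pi K x = pi K y}"

lemma J_comm: assumes "V x" "V y" shows "J x y = J y x"
proof (rule antisym)
  show "V (J x y)" "V (J y x)" using join_ub assms by auto
  show "leq (J x y) (J y x)" using join_least[OF assms] join_ub[OF assms(2,1)] by auto
  show "leq (J y x) (J x y)" using join_least[OF assms(2,1)] join_ub[OF assms] by auto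
qed
lemma mt_comm: assumes "V x" "V y" shows "mt x y = mt y x"
proof (rule antisym)
  show "V (mt x y)" "V (mt y x)" using meet_lb assms by auto
  show "leq (mt x y) (mt y x)" using meet_glb[OF assms(2,1)] meet_lb[OF assms] by auto
  show "leq (mt y x) (mt x y)" using meet_glb[OF assms] meet_lb[OF assms(2,1)] by auto
qed

lemma KG: "Kok K \<Longrightarrow> (i,j) \<in> G \<Longrightarrow> j \<in> K \<Longrightarrow> i \<in> K" unfolding Kok_def by blast
lemma KS1: "Kok K \<Longrightarrow> (i,j) \<in> Sy \<Longrightarrow> i \<in> K \<Longrightarrow> j \<in> K" unfolding Kok_def by blast
lemma KS2: "Kok K \<Longrightarrow> (i,j) \<in> Sy \<Longrightarrow> j \<in> K \<Longrightarrow> i \<in> K" unfolding Kok_def by blast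
lemma KW: "Kok K \<Longrightarrow> i \<in> Wt \<Longrightarrow> i \<in> K \<Longrightarrow> False" unfolding Kok_def by blast

lemma piJ: "Kok K \<Longrightarrow> V x \<Longrightarrow> V c \<Longrightarrow> pi K (J x c) = pi K (J (pi K x) c)"
  apply (cases x; cases c)
  apply (simp_all add: jn_def)
  apply (auto dest: G_irr G_asym Sy_irr G_Sy Sy_asym KG KS1 KS2 KW)
  done
lemma piM: "Kok K \<Longrightarrow> V x \<Longrightarrow> V c \<Longrightarrow> pi K (mt x c) = pi K (mt (pi K x) c)"
  apply (cases x; cases c)
  apply (simp_all add: mt_def lev_def lv_def)
  apply (auto dest: G_irr G_asym Sy_irr G_Sy Sy_asym KG KS1 KS2 KW)
  done

lemma pi_V: "V x \<Longrightarrow> V (pi K x)"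
  by (cases x) (auto dest: G_sub Sy_sub)

lemma thK_cg: assumes K: "Kok K" shows "cg (thK K)"
  unfolding lattice_congruence_def
proof (intro conjI allI impI)
  show "equiv C (thK K)" by (rule equivI) (auto simp: thK_def refl_on_def sym_def trans_def)
  fix a b c d assume "(a, b) \<in> thK K \<and> (c, d) \<in> thK K"
  then have h: "V a" "V b" "V c" "V d" "pi K a = pi K b" "pi K c = pi K d" by (auto simp: thK_def)
  have "pi K (J a c) = pi K (J b d)"
  proof -
    have "pi K (J a c) = pi K (J (pi K a) c)" using piJ[OF K h(1,3)] .
    also have "\<dots> = pi K (J b c)" using piJ[OF K h(2,3)] h(5) by simp
    also have "\<dots> = pi K (J c b)" using J_comm h by simp
    also have "\<dots> = pi K (J (pi K c) b)" using piJ[OF K h(3,2)] .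
    also have "\<dots> = pi K (J d b)" using piJ[OF K h(4,2)] h(6) by simp
    also have "\<dots> = pi K (J b d)" using J_comm h by simp
    finally show ?thesis .
  qed
  then show "(ljoin C leq a c, ljoin C leq b d) \<in> thK K" using h join_ub by (simp add: thK_def)
  have "pi K (mt a c) = pi K (mt b d)"
  proof -
    have "pi K (mt a c) = pi K (mt (pi K a) c)" using piM[OF K h(1,3)] .
    also have "\<dots> = pi K (mt b c)" using piM[OF K h(2,3)] h(5) by simp
    also have "\<dots> = pi K (mt c b)" using mt_comm h by simp
    also have "\<dots> = pi K (mt (pi K c) b)" using piM[OF K h(3,2)] .
    also have "\<dots> = pi K (mt d b)" using piM[OF K h(4,2)] h(6) by simp
    also have "\<dots> = pi K (mt b d)" using mt_comm h by simp
    finally show ?thesis .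
  qed
  then show "(lmeet C leq a c, lmeet C leq b d) \<in> thK K" using h meet_lb by (simp add: thK_def)
qed

lemma thK_AB: "j \<in> I \<Longrightarrow> (eA j, eB j) \<in> thK K \<longleftrightarrow> j \<in> K"
  by (simp add: thK_def)

lemma thK_BT: "(eBot, eTop) \<notin> thK K"
  by (simp add: thK_def)

lemma cn_sep: assumes "Kok K" "i \<in> K" "i \<in> I" "j \<in> I" "(eA j, eB j) \<in> cn (eA i) (eB i)"
  shows "j \<in> K"
proof -
  have "cn (eA i) (eB i) \<subseteq> thK K"
    by (rule con_least[OF thK_cg[OF assms(1)]]) (use assms thK_AB in auto)
  then show ?thesis using assms thK_AB by auto
qed

lemma cn_nall: assumes "Kok K" "i \<in> K" "i \<in> I" shows "cn (eA i) (eB i) \<noteq> C \<times> C"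
proof
  assume a: "cn (eA i) (eB i) = C \<times> C"
  have "cn (eA i) (eB i) \<subseteq> thK K"
    by (rule con_least[OF thK_cg[OF assms(1)]]) (use assms thK_AB in auto)
  then have "(eBot, eTop) \<in> thK K" using a by auto
  then show False using thK_BT by blast
qed

lemma cn_nid: "i \<in> I \<Longrightarrow> cn (eA i) (eB i) \<noteq> Id_on C"
  using cn_mem[of "eA i" "eB i"] by auto

end

lemma lub_unique: assumes "partial_order_on' M le" "is_lub M le a b s" "is_lub M le a b t" shows "s = t"
proof -
  have "s \<in> M" "t \<in> M" "le s t" "le t s" using assms(2,3) unfolding is_lub_def by auto
  then show ?thesis using assms(1) unfolding partial_order_on'_def by blast
qed
lemma glb_unique: assumes "partial_order_on' M le" "is_glb M le a b s" "is_glb M le a b t" shows "s = t"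
proof -
  have "s \<in> M" "t \<in> M" "le s t" "le t s" using assms(2,3) unfolding is_glb_def by auto
  then show ?thesis using assms(1) unfolding partial_order_on'_def by blast
qed

lemma ljoin_lub: assumes "is_lattice M le" "a \<in> M" "b \<in> M" shows "is_lub M le a b (ljoin M le a b)"
proof -
  have po: "partial_order_on' M le" using assms(1) by (simp add: is_lattice_def)
  have "\<forall>x\<in>M. \<forall>y\<in>M. (\<exists>s. is_lub M le x y s) \<and> (\<exists>m. is_glb M le x y m)"
    using assms(1) by (simp add: is_lattice_def)
  then obtain s where s: "is_lub M le a b s" using assms(2,3) by blast
  have "ljoin M le a b = s" unfolding ljoin_def
  proof (rule the_equality)
    show "is_lub M le a b s" by (rule s)
    fix t assume "is_lub M le a b t" then show "t = s" by (rule lub_unique[OF po _ s])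
  qed
  then show ?thesis using s by simp
qed
lemma lmeet_glb: assumes "is_lattice M le" "a \<in> M" "b \<in> M" shows "is_glb M le a b (lmeet M le a b)"
proof -
  have po: "partial_order_on' M le" using assms(1) by (simp add: is_lattice_def)
  have "\<forall>x\<in>M. \<forall>y\<in>M. (\<exists>s. is_lub M le x y s) \<and> (\<exists>m. is_glb M le x y m)"
    using assms(1) by (simp add: is_lattice_def)
  then obtain s where s: "is_glb M le a b s" using assms(2,3) by blast
  have "lmeet M le a b = s" unfolding lmeet_def
  proof (rule the_equality)
    show "is_glb M le a b s" by (rule s)
    fix t assume "is_glb M le a b t" then show "t = s" by (rule glb_unique[OF po _ s])
  qed
  then show ?thesis using s by simp
qed

lemma lattice_lclosed: assumes "is_lattice M le" shows "lclosed M le"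
  unfolding lclosed_def
proof (intro ballI conjI)
  fix a c assume "a \<in> M" "c \<in> M"
  then show "ljoin M le a c \<in> M" "lmeet M le a c \<in> M"
    using ljoin_lub[OF assms] lmeet_glb[OF assms] unfolding is_lub_def is_glb_def by auto
qed

locale iso =
  fixes f :: "'x \<Rightarrow> 'y" and L :: "'x set" and le :: "'x \<Rightarrow> 'x \<Rightarrow> bool"
  assumes inj: "inj_on f L"
begin

definition le' :: "'y \<Rightarrow> 'y \<Rightarrow> bool" where
  "le' X Y \<longleftrightarrow> (\<exists>x\<in>L. \<exists>y\<in>L. X = f x \<and> Y = f y \<and> le x y)"

definition F :: "('x \<times> 'x) set \<Rightarrow> ('y \<times> 'y) set" where "F \<theta> = map_prod f f ` \<theta>"
definition Gi :: "'x set \<Rightarrow> ('y \<times> 'y) set \<Rightarrow> ('x \<times> 'x) set" where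
  "Gi M \<theta>' = {(x,y). x \<in> M \<and> y \<in> M \<and> (f x, f y) \<in> \<theta>'}"

lemma le'_iff[simp]: "x \<in> L \<Longrightarrow> y \<in> L \<Longrightarrow> le' (f x) (f y) \<longleftrightarrow> le x y"
  unfolding le'_def using inj by (auto dest: inj_onD)

lemma feq[simp]: "x \<in> L \<Longrightarrow> y \<in> L \<Longrightarrow> f x = f y \<longleftrightarrow> x = y"
  using inj by (auto dest: inj_onD)

context fixes M :: "'x set" assumes hML: "M \<subseteq> L"
begin

lemma inM: "x \<in> M \<Longrightarrow> x \<in> L" using hML by auto

lemma ball_img: "(\<forall>Z\<in>f ` M. P Z) \<longleftrightarrow> (\<forall>z\<in>M. P (f z))" by auto

lemma lub_iff: "a \<in> M \<Longrightarrow> b \<in> M \<Longrightarrow> s \<in> M \<Longrightarrow> is_lub (f ` M) le' (f a) (f b) (f s) \<longleftrightarrow> is_lub M le a b s"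
  unfolding is_lub_def using inM by (auto simp: ball_img)
lemma glb_iff: "a \<in> M \<Longrightarrow> b \<in> M \<Longrightarrow> s \<in> M \<Longrightarrow> is_glb (f ` M) le' (f a) (f b) (f s) \<longleftrightarrow> is_glb M le a b s"
  unfolding is_glb_def using inM by (auto simp: ball_img)
lemma least_iff: "a \<in> M \<Longrightarrow> is_least (f ` M) le' (f a) \<longleftrightarrow> is_least M le a"
  unfolding is_least_def using inM by (auto simp: ball_img)
lemma greatest_iff: "a \<in> M \<Longrightarrow> is_greatest (f ` M) le' (f a) \<longleftrightarrow> is_greatest M le a"
  unfolding is_greatest_def using inM by (auto simp: ball_img)
lemma least_img: "is_least (f ` M) le' A \<Longrightarrow> \<exists>a\<in>M. A = f a \<and> is_least M le a"
  using least_iff unfolding is_least_def by blast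
lemma greatest_img: "is_greatest (f ` M) le' A \<Longrightarrow> \<exists>a\<in>M. A = f a \<and> is_greatest M le a"
  using greatest_iff unfolding is_greatest_def by blast

lemma po_iff: "partial_order_on' (f ` M) le' \<longleftrightarrow> partial_order_on' M le"
  unfolding partial_order_on'_def using inM by (auto simp: ball_img)

lemma lattice_iff: assumes "is_lattice M le" shows "is_lattice (f ` M) le'"
proof -
  have p: "partial_order_on' (f ` M) le'" using assms po_iff unfolding is_lattice_def by simp
  have q: "\<forall>X\<in>f ` M. \<forall>Y\<in>f ` M. (\<exists>s. is_lub (f ` M) le' X Y s) \<and> (\<exists>m. is_glb (f ` M) le' X Y m)"
  proof (intro ballI)
    fix X Y assume "X \<in> f ` M" "Y \<in> f ` M"
    then obtain a b where ab: "a \<in> M" "b \<in> M" "X = f a" "Y = f b" by auto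
    have "\<forall>x\<in>M. \<forall>y\<in>M. (\<exists>s. is_lub M le x y s) \<and> (\<exists>m. is_glb M le x y m)"
      using assms by (simp add: is_lattice_def)
    then obtain s m where sm: "is_lub M le a b s" "is_glb M le a b m" using ab by blast
    then have "s \<in> M" "m \<in> M" unfolding is_lub_def is_glb_def by auto
    then show "(\<exists>s. is_lub (f ` M) le' X Y s) \<and> (\<exists>m. is_glb (f ` M) le' X Y m)"
      using lub_iff glb_iff ab sm by blast
  qed
  show ?thesis unfolding is_lattice_def using p q by simp
qed

lemma bounded_iff: assumes "bounded_lattice M le" shows "bounded_lattice (f ` M) le'"
proof -
  have l: "is_lattice M le" and a: "\<exists>a. is_least M le a" and b: "\<exists>b. is_greatest M le b"
    using assms unfolding bounded_lattice_def by auto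
  obtain a b where ab: "is_least M le a" "is_greatest M le b" using a b by blast
  then have "a \<in> M" "b \<in> M" unfolding is_least_def is_greatest_def by auto
  then have "is_least (f ` M) le' (f a)" "is_greatest (f ` M) le' (f b)" using ab least_iff greatest_iff by auto
  then show ?thesis unfolding bounded_lattice_def using lattice_iff[OF l] by blast
qed

context assumes lat: "is_lattice M le"
begin

lemma po': "partial_order_on' (f ` M) le'" using lat po_iff unfolding is_lattice_def by simp

lemma ljoin_f: "a \<in> M \<Longrightarrow> b \<in> M \<Longrightarrow> ljoin (f ` M) le' (f a) (f b) = f (ljoin M le a b)"
proof -
  assume ab: "a \<in> M" "b \<in> M"
  have l: "is_lub M le a b (ljoin M le a b)" by (rule ljoin_lub[OF lat ab])
  then have "ljoin M le a b \<in> M" unfolding is_lub_def by simp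
  then have "is_lub (f ` M) le' (f a) (f b) (f (ljoin M le a b))" using lub_iff ab l by blast
  then show ?thesis unfolding ljoin_def using lub_unique[OF po'] by blast
qed

lemma lmeet_f: "a \<in> M \<Longrightarrow> b \<in> M \<Longrightarrow> lmeet (f ` M) le' (f a) (f b) = f (lmeet M le a b)"
proof -
  assume ab: "a \<in> M" "b \<in> M"
  have l: "is_glb M le a b (lmeet M le a b)" by (rule lmeet_glb[OF lat ab])
  then have "lmeet M le a b \<in> M" unfolding is_glb_def by simp
  then have "is_glb (f ` M) le' (f a) (f b) (f (lmeet M le a b))" using glb_iff ab l by blast
  then show ?thesis unfolding lmeet_def using glb_unique[OF po'] by blast
qed

lemma join_in: "a \<in> M \<Longrightarrow> b \<in> M \<Longrightarrow> ljoin M le a b \<in> M"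
  using ljoin_lub[OF lat] unfolding is_lub_def by blast
lemma meet_in: "a \<in> M \<Longrightarrow> b \<in> M \<Longrightarrow> lmeet M le a b \<in> M"
  using lmeet_glb[OF lat] unfolding is_glb_def by blast

lemma lclosed': "lclosed (f ` M) le'"
  by (rule lattice_lclosed[OF lattice_iff[OF lat]])

lemma F_G: "\<theta>' \<subseteq> f ` M \<times> f ` M \<Longrightarrow> F (Gi M \<theta>') = \<theta>'"
  unfolding F_def Gi_def by (auto simp: image_iff)

lemma G_F: "\<theta> \<subseteq> M \<times> M \<Longrightarrow> Gi M (F \<theta>) = \<theta>"
  unfolding F_def Gi_def using inM by auto

lemma cong_G: assumes "lattice_congruence (f ` M) le' \<theta>'" shows "lattice_congruence M le (Gi M \<theta>')"
proof -
  have e: "equiv (f ` M) \<theta>'" using assms unfolding lattice_congruence_def by simp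
  have eq: "equiv M (Gi M \<theta>')"
    using e unfolding equiv_def refl_on_def sym_def trans_def Gi_def by blast
  show ?thesis unfolding lattice_congruence_def
  proof (intro conjI eq allI impI)
    fix a b c d assume h: "(a, b) \<in> Gi M \<theta>' \<and> (c, d) \<in> Gi M \<theta>'"
    then have m: "a \<in> M" "b \<in> M" "c \<in> M" "d \<in> M" "(f a, f b) \<in> \<theta>'" "(f c, f d) \<in> \<theta>'" unfolding Gi_def by auto
    then have "(ljoin (f ` M) le' (f a) (f c), ljoin (f ` M) le' (f b) (f d)) \<in> \<theta>'"
      "(lmeet (f ` M) le' (f a) (f c), lmeet (f ` M) le' (f b) (f d)) \<in> \<theta>'"
      using assms unfolding lattice_congruence_def by blast+
    then show "(ljoin M le a c, ljoin M le b d) \<in> Gi M \<theta>'" "(lmeet M le a c, lmeet M le b d) \<in> Gi M \<theta>'"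
      using m ljoin_f lmeet_f join_in meet_in unfolding Gi_def by auto
  qed
qed

lemma cong_F: assumes "lattice_congruence M le \<theta>" shows "lattice_congruence (f ` M) le' (F \<theta>)"
proof -
  have sub: "\<theta> \<subseteq> M \<times> M" using assms unfolding lattice_congruence_def equiv_def by simp
  have e: "equiv M \<theta>" using assms unfolding lattice_congruence_def by simp
  have eq: "equiv (f ` M) (F \<theta>)"
  proof (rule equivI)
    show "F \<theta> \<subseteq> f ` M \<times> f ` M" using sub unfolding F_def by auto
    show "refl_on (f ` M) (F \<theta>)" using e unfolding refl_on_def equiv_def F_def by (auto simp: image_iff) (metis map_prod_simp)
    show "sym (F \<theta>)" using e unfolding sym_def equiv_def F_def by auto
    show "trans (F \<theta>)" unfolding trans_def F_def
    proof clarsimp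
      fix a b c d assume "(a,b) \<in> \<theta>" "(c,d) \<in> \<theta>" "f b = f c"
      moreover then have "b \<in> M" "c \<in> M" using sub by auto
      ultimately have "(a,d) \<in> \<theta>" using e inM unfolding equiv_def trans_def by (metis feq)
      then show "(f a, f d) \<in> map_prod f f ` \<theta>" by force
    qed
  qed
  show ?thesis unfolding lattice_congruence_def
  proof (intro conjI eq allI impI)
    fix A B Cc D assume h: "(A, B) \<in> F \<theta> \<and> (Cc, D) \<in> F \<theta>"
    then obtain a b c d where m: "(a,b) \<in> \<theta>" "(c,d) \<in> \<theta>" "A = f a" "B = f b" "Cc = f c" "D = f d"
      unfolding F_def by auto
    then have mm: "a \<in> M" "b \<in> M" "c \<in> M" "d \<in> M" using sub by auto
    have "(ljoin M le a c, ljoin M le b d) \<in> \<theta>" "(lmeet M le a c, lmeet M le b d) \<in> \<theta>"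
      using assms m unfolding lattice_congruence_def by blast+
    then show "(ljoin (f ` M) le' A Cc, ljoin (f ` M) le' B D) \<in> F \<theta>" "(lmeet (f ` M) le' A Cc, lmeet (f ` M) le' B D) \<in> F \<theta>"
      using m mm ljoin_f lmeet_f unfolding F_def by force+
  qed
qed

lemma con_f: assumes "x \<in> M" "y \<in> M" shows "con (f ` M) le' (f x) (f y) = F (con M le x y)"
proof
  have lc: "lclosed M le" by (rule lattice_lclosed[OF lat])
  have c: "lattice_congruence M le (con M le x y)" by (rule con_cong[OF lc assms])
  have "(x,y) \<in> con M le x y" by (rule con_mem[OF assms lc])
  then have "(f x, f y) \<in> F (con M le x y)" unfolding F_def by force
  then show "con (f ` M) le' (f x) (f y) \<subseteq> F (con M le x y)" by (rule con_least[OF cong_F[OF c]])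
  have c': "lattice_congruence (f ` M) le' (con (f ` M) le' (f x) (f y))"
    by (rule con_cong[OF lclosed']) (use assms in auto)
  have sub': "con (f ` M) le' (f x) (f y) \<subseteq> f ` M \<times> f ` M" by (rule cong_sub[OF c'])
  have "(f x, f y) \<in> con (f ` M) le' (f x) (f y)" by (rule con_mem[OF _ _ lclosed']) (use assms in auto)
  then have "(x, y) \<in> Gi M (con (f ` M) le' (f x) (f y))" using assms unfolding Gi_def by auto
  then have "con M le x y \<subseteq> Gi M (con (f ` M) le' (f x) (f y))" by (rule con_least[OF cong_G[OF c']])
  then have "F (con M le x y) \<subseteq> F (Gi M (con (f ` M) le' (f x) (f y)))" unfolding F_def by auto
  then show "F (con M le x y) \<subseteq> con (f ` M) le' (f x) (f y)" using F_G[OF sub'] by simp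
qed

lemma Princ_f: "Princ (f ` M) le' = F ` Princ M le"
proof
  show "Princ (f ` M) le' \<subseteq> F ` Princ M le"
  proof
    fix \<theta> assume "\<theta> \<in> Princ (f ` M) le'"
    then obtain x y where "x \<in> M" "y \<in> M" "\<theta> = con (f ` M) le' (f x) (f y)" unfolding Princ_def by blast
    then show "\<theta> \<in> F ` Princ M le" using con_f unfolding Princ_def by blast
  qed
  show "F ` Princ M le \<subseteq> Princ (f ` M) le'"
  proof
    fix \<theta> assume "\<theta> \<in> F ` Princ M le"
    then obtain x y where "x \<in> M" "y \<in> M" "\<theta> = F (con M le x y)" unfolding Princ_def by blast
    then have "\<theta> = con (f ` M) le' (f x) (f y)" using con_f by simp
    then show "\<theta> \<in> Princ (f ` M) le'" unfolding Princ_def using \<open>x \<in> M\<close> \<open>y \<in> M\<close> by blast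
  qed
qed

end
end

lemma F_inj: "\<theta>1 \<subseteq> L \<times> L \<Longrightarrow> \<theta>2 \<subseteq> L \<times> L \<Longrightarrow> F \<theta>1 \<subseteq> F \<theta>2 \<longleftrightarrow> \<theta>1 \<subseteq> \<theta>2"
proof
  assume s: "\<theta>1 \<subseteq> L \<times> L" "\<theta>2 \<subseteq> L \<times> L" "F \<theta>1 \<subseteq> F \<theta>2"
  show "\<theta>1 \<subseteq> \<theta>2"
  proof clarify
    fix a b assume ab: "(a,b) \<in> \<theta>1"
    then have "(f a, f b) \<in> F \<theta>2" using s(3) unfolding F_def by force
    then obtain c d where cd: "(c,d) \<in> \<theta>2" "f a = f c" "f b = f d" unfolding F_def by auto
    have "a \<in> L" "b \<in> L" "c \<in> L" "d \<in> L" using ab cd s by auto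
    then show "(a,b) \<in> \<theta>2" using cd feq by metis
  qed
qed (auto simp: F_def)

end

lemma jn_restrict:
  assumes "valid I0 G0 Sy0 Wt0 x" "valid I0 G0 Sy0 Wt0 y"
    and "\<And>i j. (i,j) \<in> G0 \<Longrightarrow> i \<in> I0 \<and> j \<in> I0" "\<And>i j. (i,j) \<in> Sy0 \<Longrightarrow> i \<in> I0 \<and> j \<in> I0"
    and "\<And>i. i \<in> Wt0 \<Longrightarrow> i \<in> I0"
    and "\<And>i j. i \<in> I0 \<Longrightarrow> j \<in> I0 \<Longrightarrow> (i,j) \<in> G1 \<longleftrightarrow> (i,j) \<in> G0"
    and "\<And>i j. i \<in> I0 \<Longrightarrow> j \<in> I0 \<Longrightarrow> (i,j) \<in> Sy1 \<longleftrightarrow> (i,j) \<in> Sy0"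
  shows "jn G1 Sy1 x y = jn G0 Sy0 x y"
  using assms(1,2)
  apply (cases x; cases y)
  apply (simp_all add: jn_def)
  apply (auto simp: assms(6,7) dest: assms(3,4,5))
  done

lemma valid_mono: "valid I0 G0 Sy0 Wt0 x \<Longrightarrow> I0 \<subseteq> I1 \<Longrightarrow> G0 \<subseteq> G1 \<Longrightarrow> Sy0 \<subseteq> Sy1 \<Longrightarrow> Wt0 \<subseteq> Wt1
  \<Longrightarrow> valid I1 G1 Sy1 Wt1 x"
  by (cases x) auto



definition ci :: "'a + 'b \<Rightarrow> 'a + 'b + nat" where
  "ci x = (case x of Inl a \<Rightarrow> Inl a | Inr b \<Rightarrow> Inr (Inl b))"
definition tg :: "nat \<Rightarrow> 'a + 'b + nat" where "tg n = Inr (Inr n)"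

lemma ci_tg[simp]: "ci i \<noteq> tg n" "tg n \<noteq> ci i" by (cases i; simp add: ci_def tg_def)+
lemma ci_inj[simp]: "ci i = ci j \<longleftrightarrow> i = j" by (cases i; cases j; simp add: ci_def)
lemma tg_inj[simp]: "tg n = tg m \<longleftrightarrow> n = m" by (simp add: tg_def)

fun encg :: "('c \<Rightarrow> 'd) \<Rightarrow> (nat \<Rightarrow> 'd) \<Rightarrow> 'c el \<Rightarrow> 'd set" where
  "encg c t eBot = {t 0}" | "encg c t eTop = {t 1}" | "encg c t (eZ n) = {t (n + 20)}"
| "encg c t (eA i) = {c i, t 3}" | "encg c t (eB i) = {c i, t 4}"
| "encg c t (eD i j) = {c i, c j, t 5}" | "encg c t (eE i j) = {c i, c j, t 6}" | "encg c t (eT i j) = {c i, c j, t 7}"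
| "encg c t (eS i j) = {c i, c j, t 8}" | "encg c t (eU i j) = {c i, c j, t 9}" | "encg c t (eW i) = {c i, t 10}"

fun kind :: "'c el \<Rightarrow> nat" where
  "kind eBot = 0" | "kind eTop = 1" | "kind (eZ n) = n + 20" | "kind (eA i) = 3" | "kind (eB i) = 4"
| "kind (eD i j) = 5" | "kind (eE i j) = 6" | "kind (eT i j) = 7" | "kind (eS i j) = 8" | "kind (eU i j) = 9"
| "kind (eW i) = 10"

fun hasi :: "'c el \<Rightarrow> bool" where
  "hasi eBot = False" | "hasi eTop = False" | "hasi (eZ n) = False" | "hasi _ = True"

context glat begin
lemma enc_inj:
  fixes c :: "'c \<Rightarrow> 'd" and t :: "nat \<Rightarrow> 'd"
  assumes ci: "\<And>i j. c i = c j \<longleftrightarrow> i = j" and ti: "\<And>n m. t n = t m \<longleftrightarrow> n = m" and ct: "\<And>i n. c i \<noteq> t n"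
    and "V x" "V y" "encg c t x = encg c t y" shows "x = y"
proof -
  have tg_enc: "\<And>n z. t n \<in> encg c t z \<longleftrightarrow> n = kind z"
    subgoal for n z by (cases z) (auto simp: ti ct[symmetric])
    done
  have fi_enc: "\<And>z. hasi z \<Longrightarrow> c (fi z) \<in> encg c t z" subgoal for z by (cases z) auto done
  have se_enc: "\<And>z. hasi z \<Longrightarrow> c (se z) \<in> encg c t z" subgoal for z by (cases z) auto done
  have k: "kind x = kind y" using tg_enc[of "kind x" x] tg_enc[of "kind x" y] assms(6) by simp
  have h: "hasi x \<Longrightarrow> c (fi x) \<in> encg c t y" "hasi x \<Longrightarrow> c (se x) \<in> encg c t y"
     "hasi y \<Longrightarrow> c (fi y) \<in> encg c t x" "hasi y \<Longrightarrow> c (se y) \<in> encg c t x"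
    using fi_enc se_enc assms(6) by metis+
  show ?thesis using assms(4,5) k h
    apply (cases x; cases y)
    apply (simp_all add: ci ct)
    apply (auto dest: G_irr G_asym Sy_irr Sy_asym)
    done
qed
end

abbreviation "enc \<equiv> encg ci tg"

locale stp =
  fixes P0 :: "'a set" and le0 :: "'a \<Rightarrow> 'a \<Rightarrow> bool"
    and P1 :: "'b set" and le1 :: "'b \<Rightarrow> 'b \<Rightarrow> bool"
    and \<psi> :: "'a \<Rightarrow> 'b"
    and bot0 top0 :: 'a and bot1 top1 :: 'b
  assumes bos0: "bounded_ordered_set P0 le0"
    and bos1: "bounded_ordered_set P1 le1"
    and lst0: "is_least P0 le0 bot0" and gr0: "is_greatest P0 le0 top0"
    and lst1: "is_least P1 le1 bot1" and gr1: "is_greatest P1 le1 top1"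
    and psiP: "\<forall>x\<in>P0. \<psi> x \<in> P1"
    and psib: "\<psi> bot0 = bot1" and psit: "\<psi> top0 = top1"
    and mono: "\<forall>x\<in>P0. \<forall>y\<in>P0. le0 x y \<longrightarrow> le1 (\<psi> x) (\<psi> y)"
    and sep: "\<forall>x\<in>P0. \<psi> x = bot1 \<longrightarrow> x = bot0"
    and nd: "bot0 \<noteq> top0"
begin

lemma refl0: "x \<in> P0 \<Longrightarrow> le0 x x" using bos0 unfolding bounded_ordered_set_def partial_order_on'_def by blast
lemma antisym0: "x \<in> P0 \<Longrightarrow> y \<in> P0 \<Longrightarrow> le0 x y \<Longrightarrow> le0 y x \<Longrightarrow> x = y"
  using bos0 unfolding bounded_ordered_set_def partial_order_on'_def by blast
lemma trans0: "x \<in> P0 \<Longrightarrow> y \<in> P0 \<Longrightarrow> z \<in> P0 \<Longrightarrow> le0 x y \<Longrightarrow> le0 y z \<Longrightarrow> le0 x z"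
  using bos0 unfolding bounded_ordered_set_def partial_order_on'_def by blast
lemma refl1: "x \<in> P1 \<Longrightarrow> le1 x x" using bos1 unfolding bounded_ordered_set_def partial_order_on'_def by blast
lemma antisym1: "x \<in> P1 \<Longrightarrow> y \<in> P1 \<Longrightarrow> le1 x y \<Longrightarrow> le1 y x \<Longrightarrow> x = y"
  using bos1 unfolding bounded_ordered_set_def partial_order_on'_def by blast
lemma trans1: "x \<in> P1 \<Longrightarrow> y \<in> P1 \<Longrightarrow> z \<in> P1 \<Longrightarrow> le1 x y \<Longrightarrow> le1 y z \<Longrightarrow> le1 x z"
  using bos1 unfolding bounded_ordered_set_def partial_order_on'_def by blast

lemma bot0P: "bot0 \<in> P0" and top0P: "top0 \<in> P0" and bot1P: "bot1 \<in> P1" and top1P: "top1 \<in> P1"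
  using lst0 gr0 lst1 gr1 unfolding is_least_def is_greatest_def by auto
lemma bot0le: "x \<in> P0 \<Longrightarrow> le0 bot0 x" using lst0 unfolding is_least_def by auto
lemma top0le: "x \<in> P0 \<Longrightarrow> le0 x top0" using gr0 unfolding is_greatest_def by auto
lemma bot1le: "x \<in> P1 \<Longrightarrow> le1 bot1 x" using lst1 unfolding is_least_def by auto
lemma top1le: "x \<in> P1 \<Longrightarrow> le1 x top1" using gr1 unfolding is_greatest_def by auto

lemma nd1: "bot1 \<noteq> top1" using sep psit nd top0P by auto

definition "Q0 = P0 - {bot0, top0}"
definition "Q1 = P1 - {bot1, top1}"

lemma psiQ: "p \<in> Q0 \<Longrightarrow> \<psi> p \<in> Q1 \<or> \<psi> p = top1"
  using psiP sep unfolding Q0_def Q1_def by auto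

definition I0 :: "('a + 'b) set" where "I0 = Inl ` Q0"
definition G0 :: "(('a + 'b) \<times> ('a + 'b)) set" where
  "G0 = {(Inl p, Inl q) | p q. p \<in> Q0 \<and> q \<in> Q0 \<and> le0 p q \<and> p \<noteq> q}"
definition I1 :: "('a + 'b) set" where "I1 = Inl ` Q0 \<union> Inr ` Q1"
definition G1 :: "(('a + 'b) \<times> ('a + 'b)) set" where
  "G1 = G0 \<union> {(Inr p, Inr q) | p q. p \<in> Q1 \<and> q \<in> Q1 \<and> le1 p q \<and> p \<noteq> q}"
definition Sy1 :: "(('a + 'b) \<times> ('a + 'b)) set" where
  "Sy1 = {(Inl p, Inr (\<psi> p)) | p. p \<in> Q0 \<and> \<psi> p \<in> Q1}"
definition Wt1 :: "('a + 'b) set" where "Wt1 = {Inl p | p. p \<in> Q0 \<and> \<psi> p = top1}"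

lemma glat0: "glat I0 G0 {} {}"
  unfolding glat_def I0_def G0_def Q0_def using antisym0 by blast

lemma glat1: "glat I1 G1 Sy1 Wt1"
  unfolding glat_def I1_def G1_def G0_def Sy1_def Wt1_def Q0_def Q1_def using antisym0 antisym1 by blast

end

context stp begin

sublocale A0: glat I0 G0 "{}" "{}" by (rule glat0)
sublocale A1: glat I1 G1 Sy1 Wt1 by (rule glat1)

lemma V01: "valid I0 G0 {} {} x \<Longrightarrow> valid I1 G1 Sy1 Wt1 x"
  by (rule valid_mono) (auto simp: I0_def I1_def G1_def)

lemma J01: "valid I0 G0 {} {} x \<Longrightarrow> valid I0 G0 {} {} y \<Longrightarrow> jn G1 Sy1 x y = jn G0 {} x y"
proof (rule jn_restrict[of I0 G0 "{}" "{}" x y G1 Sy1])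
  fix i j assume "i \<in> I0" "j \<in> I0"
  then show "(i, j) \<in> G1 \<longleftrightarrow> (i, j) \<in> G0" "(i, j) \<in> Sy1 \<longleftrightarrow> (i, j) \<in> {}"
    by (auto simp: I0_def G0_def G1_def Sy1_def)
qed (auto dest: A0.G_sub)

definition xi0 :: "'a \<Rightarrow> (('a+'b) el \<times> ('a+'b) el) set" where
  "xi0 p = (if p = bot0 then A0.cn eBot eBot else if p = top0 then A0.cn eBot eTop else A0.cn (eA (Inl p)) (eB (Inl p)))"
definition xi1 :: "'b \<Rightarrow> (('a+'b) el \<times> ('a+'b) el) set" where
  "xi1 r = (if r = bot1 then A1.cn eBot eBot else if r = top1 then A1.cn eBot eTop else A1.cn (eA (Inr r)) (eB (Inr r)))"

lemma cn0_all: "A0.cn eBot eTop = A0.C \<times> A0.C"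
  using A0.all_BT[OF A0.cn_cg A0.cn_mem] by simp
lemma cn1_all: "A1.cn eBot eTop = A1.C \<times> A1.C"
  using A1.all_BT[OF A1.cn_cg A1.cn_mem] by simp


lemma Q0P: "p \<in> Q0 \<Longrightarrow> p \<in> P0" and Q1P: "r \<in> Q1 \<Longrightarrow> r \<in> P1" by (auto simp: Q0_def Q1_def)

lemma Kok0: assumes "q \<in> Q0" shows "A0.Kok {Inl k | k. k \<in> Q0 \<and> le0 k q}"
  unfolding A0.Kok_def
proof (intro conjI allI impI)
  fix i j assume ij: "(i, j) \<in> G0" "j \<in> {Inl k | k. k \<in> Q0 \<and> le0 k q}"
  then obtain a b where ab: "i = Inl a" "j = Inl b" "a \<in> Q0" "b \<in> Q0" "le0 a b" by (auto simp: G0_def)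
  then have "le0 b q" using ij(2) by auto
  then have "le0 a q" using trans0[OF Q0P[OF ab(3)] Q0P[OF ab(4)] Q0P[OF assms] ab(5)] by simp
  then show "i \<in> {Inl k | k. k \<in> Q0 \<and> le0 k q}" using ab by auto
qed auto

lemma core0: assumes "p \<in> Q0" "q \<in> Q0"
  shows "A0.cn (eA (Inl p)) (eB (Inl p)) \<subseteq> A0.cn (eA (Inl q)) (eB (Inl q)) \<longleftrightarrow> le0 p q"
proof
  assume s: "A0.cn (eA (Inl p)) (eB (Inl p)) \<subseteq> A0.cn (eA (Inl q)) (eB (Inl q))"
  have "(eA (Inl p), eB (Inl p)) \<in> A0.cn (eA (Inl p)) (eB (Inl p))"
    by (rule A0.cn_mem) (use assms in \<open>auto simp: I0_def\<close>)
  then have "(eA (Inl p), eB (Inl p)) \<in> A0.cn (eA (Inl q)) (eB (Inl q))" using s by blast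
  then have "Inl p \<in> {Inl k | k. k \<in> Q0 \<and> le0 k q}"
    using A0.cn_sep[OF Kok0[OF assms(2)], of "Inl q" "Inl p"] assms refl0[OF Q0P[OF assms(2)]] by (auto simp: I0_def)
  then show "le0 p q" by auto
next
  assume "le0 p q"
  show "A0.cn (eA (Inl p)) (eB (Inl p)) \<subseteq> A0.cn (eA (Inl q)) (eB (Inl q))"
  proof (cases "p = q")
    case False
    then have "(Inl p, Inl q) \<in> G0" using assms \<open>le0 p q\<close> by (auto simp: G0_def)
    then show ?thesis by (rule A0.G_mono)
  qed simp
qed

lemma nall0: assumes "p \<in> Q0" shows "A0.cn (eA (Inl p)) (eB (Inl p)) \<noteq> A0.C \<times> A0.C"
  by (rule A0.cn_nall[OF Kok0[OF assms]]) (use assms refl0 Q0P in \<open>auto simp: I0_def\<close>)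

definition K1 :: "'b \<Rightarrow> ('a + 'b) set" where
  "K1 s = {Inr k | k. k \<in> Q1 \<and> le1 k s} \<union> {Inl p | p. p \<in> Q0 \<and> \<psi> p \<in> Q1 \<and> le1 (\<psi> p) s}"

lemma Kok1: assumes "s \<in> Q1" shows "A1.Kok (K1 s)"
  unfolding A1.Kok_def
proof (intro conjI allI impI)
  fix i j assume ij: "(i, j) \<in> G1" "j \<in> K1 s"
  show "i \<in> K1 s"
  proof (cases "(i,j) \<in> G0")
    case True
    then obtain p q where pq: "i = Inl p" "j = Inl q" "p \<in> Q0" "q \<in> Q0" "le0 p q" by (auto simp: G0_def)
    then have q: "\<psi> q \<in> Q1" "le1 (\<psi> q) s" using ij(2) by (auto simp: K1_def)
    have m: "le1 (\<psi> p) (\<psi> q)" using mono pq Q0P by blast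
    have pP: "\<psi> p \<in> P1" "\<psi> q \<in> P1" using psiP pq Q0P by auto
    have "\<psi> p \<noteq> top1"
    proof
      assume "\<psi> p = top1"
      then have "\<psi> q = top1" using m antisym1 top1le pP top1P by metis
      then show False using q by (simp add: Q1_def)
    qed
    then have "\<psi> p \<in> Q1" using psiQ pq by blast
    moreover have "le1 (\<psi> p) s" using trans1[OF pP(1) pP(2) Q1P[OF assms] m q(2)] .
    ultimately show ?thesis using pq by (auto simp: K1_def)
  next
    case False
    then obtain p q where pq: "i = Inr p" "j = Inr q" "p \<in> Q1" "q \<in> Q1" "le1 p q" using ij(1) by (auto simp: G1_def)
    then have "le1 q s" using ij(2) by (auto simp: K1_def)
    then have "le1 p s" using trans1 pq Q1P assms by blast
    then show ?thesis using pq by (auto simp: K1_def)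
  qed
next
  fix i j assume "(i, j) \<in> Sy1"
  then show "i \<in> K1 s \<longleftrightarrow> j \<in> K1 s" by (auto simp: Sy1_def K1_def)
next
  show "\<forall>i\<in>Wt1. i \<notin> K1 s" by (auto simp: Wt1_def K1_def Q1_def)
qed

lemma core1: assumes "r \<in> Q1" "s \<in> Q1"
  shows "A1.cn (eA (Inr r)) (eB (Inr r)) \<subseteq> A1.cn (eA (Inr s)) (eB (Inr s)) \<longleftrightarrow> le1 r s"
proof
  assume sb: "A1.cn (eA (Inr r)) (eB (Inr r)) \<subseteq> A1.cn (eA (Inr s)) (eB (Inr s))"
  have "(eA (Inr r), eB (Inr r)) \<in> A1.cn (eA (Inr r)) (eB (Inr r))"
    by (rule A1.cn_mem) (use assms in \<open>auto simp: I1_def\<close>)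
  then have "(eA (Inr r), eB (Inr r)) \<in> A1.cn (eA (Inr s)) (eB (Inr s))" using sb by blast
  then have "Inr r \<in> K1 s"
    using A1.cn_sep[OF Kok1[OF assms(2)], of "Inr s" "Inr r"] assms refl1[OF Q1P[OF assms(2)]] by (auto simp: I1_def K1_def)
  then show "le1 r s" by (auto simp: K1_def)
next
  assume "le1 r s"
  show "A1.cn (eA (Inr r)) (eB (Inr r)) \<subseteq> A1.cn (eA (Inr s)) (eB (Inr s))"
  proof (cases "r = s")
    case False
    then have "(Inr r, Inr s) \<in> G1" using assms \<open>le1 r s\<close> by (auto simp: G1_def)
    then show ?thesis by (rule A1.G_mono)
  qed simp
qed

lemma nall1: assumes "r \<in> Q1" shows "A1.cn (eA (Inr r)) (eB (Inr r)) \<noteq> A1.C \<times> A1.C"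
  by (rule A1.cn_nall[OF Kok1[OF assms]]) (use assms refl1 Q1P in \<open>auto simp: I1_def K1_def\<close>)

lemma link1: assumes "p \<in> Q0" shows "A1.cn (eA (Inl p)) (eB (Inl p)) = xi1 (\<psi> p)"
proof (cases "\<psi> p = top1")
  case True
  then have "Inl p \<in> Wt1" using assms by (auto simp: Wt1_def)
  then show ?thesis using A1.W_all True cn1_all nd1 by (simp add: xi1_def)
next
  case False
  then have q: "\<psi> p \<in> Q1" using psiQ assms by blast
  then have "(Inl p, Inr (\<psi> p)) \<in> Sy1" using assms by (auto simp: Sy1_def)
  then have "A1.cn (eA (Inl p)) (eB (Inl p)) = A1.cn (eA (Inr (\<psi> p))) (eB (Inr (\<psi> p)))" by (rule A1.Sy_eq)
  then show ?thesis using q by (auto simp: xi1_def Q1_def)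
qed


lemma PQ0: "p \<in> P0 \<Longrightarrow> p = bot0 \<or> p = top0 \<or> p \<in> Q0" by (auto simp: Q0_def)
lemma PQ1: "p \<in> P1 \<Longrightarrow> p = bot1 \<or> p = top1 \<or> p \<in> Q1" by (auto simp: Q1_def)

lemma xi0_bot: "xi0 bot0 = Id_on A0.C" by (simp add: xi0_def A0.cn_self)
lemma xi0_top: "xi0 top0 = A0.C \<times> A0.C" using nd by (simp add: xi0_def cn0_all)
lemma xi0_mid: "p \<in> Q0 \<Longrightarrow> xi0 p = A0.cn (eA (Inl p)) (eB (Inl p))" by (simp add: xi0_def Q0_def)
lemma xi1_bot: "xi1 bot1 = Id_on A1.C" by (simp add: xi1_def A1.cn_self)
lemma xi1_top: "xi1 top1 = A1.C \<times> A1.C" using nd1 by (simp add: xi1_def cn1_all)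
lemma xi1_mid: "p \<in> Q1 \<Longrightarrow> xi1 p = A1.cn (eA (Inr p)) (eB (Inr p))" by (simp add: xi1_def Q1_def)

lemma xi0_cg: "p \<in> P0 \<Longrightarrow> A0.cg (xi0 p)"
  unfolding xi0_def using A0.cn_cg by (auto simp: Q0_def I0_def)
lemma xi1_cg: "p \<in> P1 \<Longrightarrow> A1.cg (xi1 p)"
  unfolding xi1_def using A1.cn_cg by (auto simp: Q1_def I1_def)

lemma Id_le0: "p \<in> P0 \<Longrightarrow> Id_on A0.C \<subseteq> xi0 p" using cong_refl[OF xi0_cg] by auto
lemma Id_le1: "p \<in> P1 \<Longrightarrow> Id_on A1.C \<subseteq> xi1 p" using cong_refl[OF xi1_cg] by auto
lemma le_all0: "p \<in> P0 \<Longrightarrow> xi0 p \<subseteq> A0.C \<times> A0.C" using cong_sub[OF xi0_cg] .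
lemma le_all1: "p \<in> P1 \<Longrightarrow> xi1 p \<subseteq> A1.C \<times> A1.C" using cong_sub[OF xi1_cg] .

lemma mid_nId0: "p \<in> Q0 \<Longrightarrow> \<not> xi0 p \<subseteq> Id_on A0.C"
  using A0.cn_mem[of "eA (Inl p)" "eB (Inl p)"] by (auto simp: xi0_mid I0_def)
lemma mid_nId1: "p \<in> Q1 \<Longrightarrow> \<not> xi1 p \<subseteq> Id_on A1.C"
  using A1.cn_mem[of "eA (Inr p)" "eB (Inr p)"] by (auto simp: xi1_mid I1_def)
lemma all_nId0: "\<not> A0.C \<times> A0.C \<subseteq> Id_on A0.C"
proof
  assume h: "A0.C \<times> A0.C \<subseteq> Id_on A0.C"
  have "(eBot, eTop) \<in> Id_on A0.C" using h by (rule subsetD) simp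
  then show False by (simp add: Id_on_def)
qed
lemma all_nId1: "\<not> A1.C \<times> A1.C \<subseteq> Id_on A1.C"
proof
  assume h: "A1.C \<times> A1.C \<subseteq> Id_on A1.C"
  have "(eBot, eTop) \<in> Id_on A1.C" using h by (rule subsetD) simp
  then show False by (simp add: Id_on_def)
qed

lemma ord0: assumes "p \<in> P0" "q \<in> P0" shows "le0 p q \<longleftrightarrow> xi0 p \<subseteq> xi0 q"
proof -
  have pb: "le0 p bot0 \<longleftrightarrow> p = bot0" using antisym0 bot0le assms refl0 bot0P by metis
  have tq: "le0 top0 q \<longleftrightarrow> q = top0" using antisym0 top0le assms refl0 top0P by metis
  consider "p = bot0" | "p = top0" "p \<noteq> bot0" | "p \<in> Q0" using PQ0[OF assms(1)] nd by blast
  then show ?thesis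
  proof cases
    case 1 then show ?thesis using bot0le[OF assms(2)] Id_le0[OF assms(2)] xi0_bot by simp
  next
    case 2
    consider "q = bot0" | "q = top0" | "q \<in> Q0" using PQ0[OF assms(2)] by blast
    then show ?thesis
    proof cases
      case 1 then show ?thesis using 2 pb all_nId0 xi0_bot xi0_top by auto
    next
      case 2 then show ?thesis using \<open>p = top0\<close> refl0 top0P by simp
    next
      case 3
      have "\<not> A0.C \<times> A0.C \<subseteq> xi0 q" using nall0[OF 3] le_all0[OF assms(2)] xi0_mid[OF 3] by auto
      then show ?thesis using 2 3 tq xi0_top by (auto simp: Q0_def)
    qed
  next
    case 3
    consider "q = bot0" | "q = top0" | "q \<in> Q0" using PQ0[OF assms(2)] by blast
    then show ?thesis
    proof cases
      case 1 then show ?thesis using 3 pb mid_nId0 xi0_bot by (auto simp: Q0_def)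
    next
      case 2 then show ?thesis using top0le[OF assms(1)] le_all0[OF assms(1)] xi0_top by simp
    next
      case q: 3 then show ?thesis using core0[OF 3 q] xi0_mid 3 by simp
    qed
  qed
qed

lemma ord1: assumes "p \<in> P1" "q \<in> P1" shows "le1 p q \<longleftrightarrow> xi1 p \<subseteq> xi1 q"
proof -
  have pb: "le1 p bot1 \<longleftrightarrow> p = bot1" using antisym1 bot1le assms refl1 bot1P by metis
  have tq: "le1 top1 q \<longleftrightarrow> q = top1" using antisym1 top1le assms refl1 top1P by metis
  consider "p = bot1" | "p = top1" "p \<noteq> bot1" | "p \<in> Q1" using PQ1[OF assms(1)] nd1 by blast
  then show ?thesis
  proof cases
    case 1 then show ?thesis using bot1le[OF assms(2)] Id_le1[OF assms(2)] xi1_bot by simp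
  next
    case 2
    consider "q = bot1" | "q = top1" | "q \<in> Q1" using PQ1[OF assms(2)] by blast
    then show ?thesis
    proof cases
      case 1 then show ?thesis using 2 pb all_nId1 xi1_bot xi1_top by auto
    next
      case 2 then show ?thesis using \<open>p = top1\<close> refl1 top1P by simp
    next
      case 3
      have "\<not> A1.C \<times> A1.C \<subseteq> xi1 q" using nall1[OF 3] le_all1[OF assms(2)] xi1_mid[OF 3] by auto
      then show ?thesis using 2 3 tq xi1_top by (auto simp: Q1_def)
    qed
  next
    case 3
    consider "q = bot1" | "q = top1" | "q \<in> Q1" using PQ1[OF assms(2)] by blast
    then show ?thesis
    proof cases
      case 1 then show ?thesis using 3 pb mid_nId1 xi1_bot by (auto simp: Q1_def)
    next
      case 2 then show ?thesis using top1le[OF assms(1)] le_all1[OF assms(1)] xi1_top by simp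
    next
      case q: 3 then show ?thesis using core1[OF 3 q] xi1_mid 3 by simp
    qed
  qed
qed


lemma link: assumes x: "valid I0 G0 {} {} x" and y: "valid I0 G0 {} {} y"
  shows "\<exists>p\<in>P0. A0.cn x y = xi0 p \<and> A1.cn x y = xi1 (\<psi> p)"
proof (cases "x = y")
  case True
  have "A0.cn x y = xi0 bot0" "A1.cn x y = xi1 (\<psi> bot0)"
    using A0.cn_self[OF x] A1.cn_self[OF V01[OF x]] xi0_bot xi1_bot psib True by simp_all
  then show ?thesis using bot0P by blast
next
  case ne: False
  have x1: "valid I1 G1 Sy1 Wt1 x" and y1: "valid I1 G1 Sy1 Wt1 y" using V01 x y by auto
  have h0: "case col (mt x y) (jn G0 {} x y) of None \<Rightarrow> A0.cn x y = A0.C \<times> A0.C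
      | Some i \<Rightarrow> i \<in> I0 \<and> A0.cn x y = A0.cn (eA i) (eB i)" by (rule A0.classify[OF x y ne])
  have h1: "case col (mt x y) (jn G0 {} x y) of None \<Rightarrow> A1.cn x y = A1.C \<times> A1.C
      | Some i \<Rightarrow> i \<in> I1 \<and> A1.cn x y = A1.cn (eA i) (eB i)"
    using A1.classify[OF x1 y1 ne] J01[OF x y] by simp
  show ?thesis
  proof (cases "col (mt x y) (jn G0 {} x y)")
    case None
    then have "A0.cn x y = xi0 top0" "A1.cn x y = xi1 (\<psi> top0)" using h0 h1 xi0_top xi1_top psit by simp_all
    then show ?thesis using top0P by blast
  next
    case (Some i)
    then have "i \<in> I0" "A0.cn x y = A0.cn (eA i) (eB i)" "A1.cn x y = A1.cn (eA i) (eB i)" using h0 h1 by auto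
    then obtain p where p: "p \<in> Q0" "i = Inl p" "A0.cn x y = A0.cn (eA i) (eB i)" "A1.cn x y = A1.cn (eA i) (eB i)"
      by (auto simp: I0_def)
    then have "A0.cn x y = xi0 p" "A1.cn x y = xi1 (\<psi> p)" using xi0_mid[OF p(1)] link1[OF p(1)] by simp_all
    then show ?thesis using Q0P[OF p(1)] by blast
  qed
qed

lemma cls1: assumes x: "valid I1 G1 Sy1 Wt1 x" and y: "valid I1 G1 Sy1 Wt1 y"
  shows "A1.cn x y \<in> xi1 ` P1"
proof (cases "x = y")
  case True
  then have "A1.cn x y = xi1 bot1" using A1.cn_self[OF x] xi1_bot by simp
  then show ?thesis using bot1P by blast
next
  case ne: False
  have h1: "case col (mt x y) (jn G1 Sy1 x y) of None \<Rightarrow> A1.cn x y = A1.C \<times> A1.C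
      | Some i \<Rightarrow> i \<in> I1 \<and> A1.cn x y = A1.cn (eA i) (eB i)" by (rule A1.classify[OF x y ne])
  show ?thesis
  proof (cases "col (mt x y) (jn G1 Sy1 x y)")
    case None
    then have "A1.cn x y = xi1 top1" using h1 xi1_top by simp
    then show ?thesis using top1P by blast
  next
    case (Some i)
    then have i: "i \<in> I1" "A1.cn x y = A1.cn (eA i) (eB i)" using h1 by auto
    show ?thesis
    proof (cases i)
      case (Inl p)
      then have "p \<in> Q0" using i by (auto simp: I1_def)
      then have "A1.cn x y = xi1 (\<psi> p)" using i Inl link1 by simp
      moreover have "\<psi> p \<in> P1" using psiP Q0P[OF \<open>p \<in> Q0\<close>] by blast
      ultimately show ?thesis by blast
    next
      case (Inr r)
      then have "r \<in> Q1" using i by (auto simp: I1_def)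
      then have "A1.cn x y = xi1 r" using i Inr xi1_mid by simp
      then show ?thesis using Q1P[OF \<open>r \<in> Q1\<close>] by blast
    qed
  qed
qed

lemma princ0: "Princ A0.C leq = xi0 ` P0"
proof
  show "Princ A0.C leq \<subseteq> xi0 ` P0"
  proof
    fix \<theta> assume "\<theta> \<in> Princ A0.C leq"
    then obtain x y where uv: "valid I0 G0 {} {} x" "valid I0 G0 {} {} y" and t: "\<theta> = A0.cn x y" unfolding Princ_def by blast
    have "A0.cn x y \<in> xi0 ` P0" using link[OF uv] by blast
    then show "\<theta> \<in> xi0 ` P0" using t by simp
  qed
  show "xi0 ` P0 \<subseteq> Princ A0.C leq"
  proof
    fix \<theta> assume "\<theta> \<in> xi0 ` P0"
    then obtain p where p: "p \<in> P0" "\<theta> = xi0 p" by auto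
    have "\<exists>u v. valid I0 G0 {} {} u \<and> valid I0 G0 {} {} v \<and> xi0 p = A0.cn u v"
    proof (cases "p \<in> Q0")
      case True
      then have "valid I0 G0 {} {} (eA (Inl p))" "valid I0 G0 {} {} (eB (Inl p))" by (auto simp: I0_def)
      then show ?thesis using xi0_mid[OF True] by blast
    next
      case False
      then have "xi0 p = A0.cn eBot eBot \<or> xi0 p = A0.cn eBot eTop" using p(1) unfolding xi0_def by (auto simp: Q0_def)
      moreover have "valid I0 G0 {} {} eBot" "valid I0 G0 {} {} eTop" by simp_all
      ultimately show ?thesis by blast
    qed
    then show "\<theta> \<in> Princ A0.C leq" unfolding Princ_def using p by auto
  qed
qed

lemma princ1: "Princ A1.C leq = xi1 ` P1"
proof
  show "Princ A1.C leq \<subseteq> xi1 ` P1"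
  proof
    fix \<theta> assume "\<theta> \<in> Princ A1.C leq"
    then obtain x y where uv: "valid I1 G1 Sy1 Wt1 x" "valid I1 G1 Sy1 Wt1 y" and t: "\<theta> = A1.cn x y" unfolding Princ_def by blast
    have "A1.cn x y \<in> xi1 ` P1" using cls1[OF uv] by blast
    then show "\<theta> \<in> xi1 ` P1" using t by simp
  qed
  show "xi1 ` P1 \<subseteq> Princ A1.C leq"
  proof
    fix \<theta> assume "\<theta> \<in> xi1 ` P1"
    then obtain p where p: "p \<in> P1" "\<theta> = xi1 p" by auto
    have "\<exists>u v. valid I1 G1 Sy1 Wt1 u \<and> valid I1 G1 Sy1 Wt1 v \<and> xi1 p = A1.cn u v"
    proof (cases "p \<in> Q1")
      case True
      then have "valid I1 G1 Sy1 Wt1 (eA (Inr p))" "valid I1 G1 Sy1 Wt1 (eB (Inr p))" by (auto simp: I1_def)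
      then show ?thesis using xi1_mid[OF True] by blast
    next
      case False
      then have "xi1 p = A1.cn eBot eBot \<or> xi1 p = A1.cn eBot eTop" using p(1) unfolding xi1_def by (auto simp: Q1_def)
      moreover have "valid I1 G1 Sy1 Wt1 eBot" "valid I1 G1 Sy1 Wt1 eTop" by simp_all
      ultimately show ?thesis by blast
    qed
    then show "\<theta> \<in> Princ A1.C leq" unfolding Princ_def using p by auto
  qed
qed


lemma inj_enc: "inj_on enc A1.C"
  by (rule inj_onI) (rule A1.enc_inj[of ci tg], auto)

lemma lat0: "is_lattice A0.C leq" using A0.bounded unfolding bounded_lattice_def by simp
lemma lat1: "is_lattice A1.C leq" using A1.bounded unfolding bounded_lattice_def by simp
lemma C01: "A0.C \<subseteq> A1.C" using V01 by auto

theorem main_nd: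
  "\<exists>(L1 :: ('a + 'b + nat) set set) (L0 :: ('a + 'b + nat) set set) le \<xi>0 \<xi>1.
           bounded_lattice L1 le \<and> zo_sublattice L0 L1 le \<and>
           order_iso_Princ P0 le0 L0 le \<xi>0 \<and> order_iso_Princ P1 le1 L1 le \<xi>1 \<and>
           (\<forall>p\<in>P0. \<forall>x\<in>L0. \<forall>y\<in>L0. \<xi>0 p = con L0 le x y \<longrightarrow>
               \<psi> p = the_inv_into P1 \<xi>1 (con L1 le x y))"
proof -
  interpret T: iso enc A1.C leq by (unfold_locales) (rule inj_enc)
  let ?L1 = "enc ` A1.C" and ?L0 = "enc ` A0.C" and ?le = T.le'
  let ?x0 = "\<lambda>p. T.F (xi0 p)" and ?x1 = "\<lambda>p. T.F (xi1 p)"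
  have sub1: "A1.C \<subseteq> A1.C" by simp
  have b: "bounded_lattice ?L1 ?le" by (rule T.bounded_iff[OF sub1 A1.bounded])
  have z: "zo_sublattice ?L0 ?L1 ?le"
    unfolding zo_sublattice_def
  proof (intro conjI ballI allI impI)
    show "?L0 \<subseteq> ?L1" using C01 by auto
  next
    fix X Y assume "X \<in> ?L0" "Y \<in> ?L0"
    then obtain x y where xy: "x \<in> A0.C" "y \<in> A0.C" "X = enc x" "Y = enc y" by auto
    then have xy1: "x \<in> A1.C" "y \<in> A1.C" using C01 by auto
    have "ljoin ?L1 ?le X Y = enc (jn G1 Sy1 x y)"
      using T.ljoin_f[OF sub1 lat1 xy1] xy xy1 by simp
    also have "\<dots> = enc (jn G0 {} x y)" using J01 xy by simp
    finally show "ljoin ?L1 ?le X Y \<in> ?L0" using A0.join_ub xy by auto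
    have "lmeet ?L1 ?le X Y = enc (mt x y)"
      using T.lmeet_f[OF sub1 lat1 xy1] xy xy1 by simp
    then show "lmeet ?L1 ?le X Y \<in> ?L0" using A0.meet_lb xy by auto
  next
    fix a assume "is_least ?L1 ?le a"
    then obtain b where "b \<in> A1.C" "a = enc b" "is_least A1.C leq b" using T.least_img[OF sub1] by blast
    then have "a = enc eBot" using A1.least_iff by auto
    moreover have "enc eBot \<in> ?L0" by (rule imageI) simp
    ultimately show "a \<in> ?L0" by simp
  next
    fix a assume "is_greatest ?L1 ?le a"
    then obtain b where "b \<in> A1.C" "a = enc b" "is_greatest A1.C leq b" using T.greatest_img[OF sub1] by blast
    then have "a = enc eTop" using A1.greatest_iff by auto
    moreover have "enc eTop \<in> ?L0" by (rule imageI) simp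
    ultimately show "a \<in> ?L0" by simp
  qed
  have sx0: "p \<in> P0 \<Longrightarrow> xi0 p \<subseteq> A1.C \<times> A1.C" for p using le_all0 C01 by blast
  have sx1: "p \<in> P1 \<Longrightarrow> xi1 p \<subseteq> A1.C \<times> A1.C" for p using le_all1 by blast
  have o0: "p \<in> P0 \<Longrightarrow> q \<in> P0 \<Longrightarrow> le0 p q \<longleftrightarrow> ?x0 p \<subseteq> ?x0 q" for p q
    using ord0 T.F_inj[OF sx0 sx0] by simp
  have o1: "p \<in> P1 \<Longrightarrow> q \<in> P1 \<Longrightarrow> le1 p q \<longleftrightarrow> ?x1 p \<subseteq> ?x1 q" for p q
    using ord1 T.F_inj[OF sx1 sx1] by simp
  have inj0: "inj_on ?x0 P0"
    by (rule inj_onI) (metis o0 antisym0 subset_refl)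
  have inj1: "inj_on ?x1 P1"
    by (rule inj_onI) (metis o1 antisym1 subset_refl)
  have pr0: "Princ ?L0 ?le = ?x0 ` P0" using T.Princ_f[OF C01 lat0] princ0 by (simp add: image_image)
  have pr1: "Princ ?L1 ?le = ?x1 ` P1" using T.Princ_f[OF sub1 lat1] princ1 by (simp add: image_image)
  have i0: "order_iso_Princ P0 le0 ?L0 ?le ?x0"
    unfolding order_iso_Princ_def bij_betw_def using inj0 pr0 o0 by simp
  have i1: "order_iso_Princ P1 le1 ?L1 ?le ?x1"
    unfolding order_iso_Princ_def bij_betw_def using inj1 pr1 o1 by simp
  have fin: "\<forall>p\<in>P0. \<forall>X\<in>?L0. \<forall>Y\<in>?L0. ?x0 p = con ?L0 ?le X Y \<longrightarrow> \<psi> p = the_inv_into P1 ?x1 (con ?L1 ?le X Y)"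
  proof (intro ballI impI)
    fix p X Y assume p: "p \<in> P0" and XY: "X \<in> ?L0" "Y \<in> ?L0" and e: "?x0 p = con ?L0 ?le X Y"
    then obtain x y where xy: "x \<in> A0.C" "y \<in> A0.C" "X = enc x" "Y = enc y" by auto
    obtain p' where p': "p' \<in> P0" "A0.cn x y = xi0 p'" "A1.cn x y = xi1 (\<psi> p')" using link xy by blast
    have "con ?L0 ?le X Y = T.F (A0.cn x y)" using T.con_f[OF C01 lat0] xy by simp
    then have "?x0 p = ?x0 p'" using e p' by simp
    then have pp: "p = p'" using inj0 p p'(1) by (meson inj_onD)
    have "con ?L1 ?le X Y = T.F (A1.cn x y)" using T.con_f[OF sub1 lat1] xy C01 by auto
    then have "con ?L1 ?le X Y = ?x1 (\<psi> p)" using p' pp by simp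
    moreover have "\<psi> p \<in> P1" using psiP p by blast
    ultimately show "\<psi> p = the_inv_into P1 ?x1 (con ?L1 ?le X Y)" using the_inv_into_f_f[OF inj1] by simp
  qed
  show ?thesis using b z i0 i1 fin by blast
qed

end

lemma single_facts:
  fixes e :: 'x and le :: "'x \<Rightarrow> 'x \<Rightarrow> bool"
  assumes le: "le = (\<lambda>_ _. True)"
  shows "bounded_lattice {e} le" "ljoin {e} le e e = e" "lmeet {e} le e e = e"
    "con {e} le e e = {(e,e)}" "Princ {e} le = {{(e,e)}}"
proof -
  have lub: "is_lub {e} le e e s \<longleftrightarrow> s = e" for s unfolding is_lub_def le by auto
  have glb: "is_glb {e} le e e s \<longleftrightarrow> s = e" for s unfolding is_glb_def le by auto
  show "bounded_lattice {e} le"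
    unfolding bounded_lattice_def is_lattice_def partial_order_on'_def is_least_def is_greatest_def
    using lub glb le by auto
  show j: "ljoin {e} le e e = e" unfolding ljoin_def lub by simp
  show m: "lmeet {e} le e e = e" unfolding lmeet_def glb by simp
  have lc: "lclosed {e} le" unfolding lclosed_def using j m by simp
  have cg: "lattice_congruence {e} le {(e,e)}"
    unfolding lattice_congruence_def equiv_def refl_on_def sym_def trans_def using j m by auto
  have "con {e} le e e \<subseteq> {(e,e)}" by (rule con_least[OF cg]) simp
  moreover have "(e,e) \<in> con {e} le e e" by (rule con_mem[OF _ _ lc]) simp_all
  ultimately show c: "con {e} le e e = {(e,e)}" by blast
  show "Princ {e} le = {{(e,e)}}" unfolding Princ_def using c by auto
qed

theorem main_degen:
  fixes P0 :: "'a set" and le0 :: "'a \<Rightarrow> 'a \<Rightarrow> bool"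
    and P1 :: "'b set" and le1 :: "'b \<Rightarrow> 'b \<Rightarrow> bool"
    and \<psi> :: "'a \<Rightarrow> 'b"
    and bot0 top0 :: 'a and bot1 top1 :: 'b
  assumes "bounded_ordered_set P0 le0"
    and "bounded_ordered_set P1 le1"
    and "is_least P0 le0 bot0" and "is_greatest P0 le0 top0"
    and "is_least P1 le1 bot1" and "is_greatest P1 le1 top1"
    and "\<forall>x\<in>P0. \<psi> x \<in> P1"
    and "\<psi> bot0 = bot1" and "\<psi> top0 = top1"
    and "bot0 = top0"
  shows "\<exists>(L1 :: ('a + 'b + nat) set set) (L0 :: ('a + 'b + nat) set set) le \<xi>0 \<xi>1.
           bounded_lattice L1 le \<and> zo_sublattice L0 L1 le \<and>
           order_iso_Princ P0 le0 L0 le \<xi>0 \<and> order_iso_Princ P1 le1 L1 le \<xi>1 \<and>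
           (\<forall>p\<in>P0. \<forall>x\<in>L0. \<forall>y\<in>L0. \<xi>0 p = con L0 le x y \<longrightarrow>
               \<psi> p = the_inv_into P1 \<xi>1 (con L1 le x y))"
proof -
  have P0: "P0 = {bot0}"
    using assms(1,3,4,10) unfolding bounded_ordered_set_def partial_order_on'_def is_least_def is_greatest_def
    by blast
  have "bot1 = top1" using assms(8,9,10) by simp
  then have P1: "P1 = {bot1}"
    using assms(2,5,6) unfolding bounded_ordered_set_def partial_order_on'_def is_least_def is_greatest_def
    by blast
  have r0: "le0 bot0 bot0" and r1: "le1 bot1 bot1" using assms(3,5) unfolding is_least_def by auto
  define e :: "('a + 'b + nat) set" where "e = {}"
  define le :: "('a + 'b + nat) set \<Rightarrow> ('a + 'b + nat) set \<Rightarrow> bool" where "le = (\<lambda>_ _. True)"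
  note sf = single_facts[OF le_def, of e]
  define c where "c = {(e,e)}"
  have b: "bounded_lattice {e} le" by (rule sf(1))
  have z: "zo_sublattice {e} {e} le" unfolding zo_sublattice_def is_least_def is_greatest_def using sf(2,3) by auto
  have i0: "order_iso_Princ P0 le0 {e} le (\<lambda>_. c)"
    unfolding order_iso_Princ_def bij_betw_def using sf(5) P0 r0 by (auto simp: c_def)
  have i1: "order_iso_Princ P1 le1 {e} le (\<lambda>_. c)"
    unfolding order_iso_Princ_def bij_betw_def using sf(5) P1 r1 by (auto simp: c_def)
  have "the_inv_into P1 (\<lambda>_. c) c = bot1" using P1 by (simp add: the_inv_into_def)
  then have f: "\<forall>p\<in>P0. \<forall>x\<in>{e}. \<forall>y\<in>{e}. c = con {e} le x y \<longrightarrow> \<psi> p = the_inv_into P1 (\<lambda>_. c) (con {e} le x y)"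
    using P0 assms(8) sf(4) by (auto simp: c_def)
  show ?thesis using b z i0 i1 f by blast
qed

theorem mainTheorem2:
  fixes P0 :: "'a set" and le0 :: "'a \<Rightarrow> 'a \<Rightarrow> bool"
    and P1 :: "'b set" and le1 :: "'b \<Rightarrow> 'b \<Rightarrow> bool"
    and \<psi> :: "'a \<Rightarrow> 'b"
    and bot0 top0 :: 'a and bot1 top1 :: 'b
  assumes "bounded_ordered_set P0 le0"
    and "bounded_ordered_set P1 le1"
    and "is_least P0 le0 bot0" and "is_greatest P0 le0 top0"
    and "is_least P1 le1 bot1" and "is_greatest P1 le1 top1"
    and "\<forall>x\<in>P0. \<psi> x \<in> P1"
    and "\<psi> bot0 = bot1" and "\<psi> top0 = top1"
    and "\<forall>x\<in>P0. \<forall>y\<in>P0. le0 x y \<longrightarrow> le1 (\<psi> x) (\<psi> y)"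
    and "\<forall>x\<in>P0. \<psi> x = bot1 \<longrightarrow> x = bot0"
  shows "\<exists>(L1 :: ('a + 'b + nat) set set) (L0 :: ('a + 'b + nat) set set) le \<xi>0 \<xi>1.
           bounded_lattice L1 le \<and> zo_sublattice L0 L1 le \<and>
           order_iso_Princ P0 le0 L0 le \<xi>0 \<and> order_iso_Princ P1 le1 L1 le \<xi>1 \<and>
           (\<forall>p\<in>P0. \<forall>x\<in>L0. \<forall>y\<in>L0. \<xi>0 p = con L0 le x y \<longrightarrow>
               \<psi> p = the_inv_into P1 \<xi>1 (con L1 le x y))"
  proof (cases "bot0 = top0")
  case True
  show ?thesis by (rule main_degen) (use assms True in auto)
next
  case False
  interpret S: stp P0 le0 P1 le1 \<psi> bot0 top0 bot1 top1
    by (unfold_locales) (use assms False in auto)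
  show ?thesis by (rule S.main_nd)
qed

end
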